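(* There exist universal constants $C,C'>0$ such that the following holds. Let $0<\varepsilon<1$, $d,\lambda,k\in\mathbb{N}$ with $k\ge2$, $t=\lceil C\varepsilon^{-2}(\lambda\log(2/\varepsilon)+\log k)\rceil$, and let $G\in\mathbb{R}^{t\times d}$ be a Gaussian JL map. Then for every finite set $P\subset\mathbb{R}^d$ with $|P|\ge k$ and $\operatorname{ddim}(P)=\lambda$, with probability at least $2/3$, the following holds for every diversity measure $\operatorname{div}$ satisfying Property (P): letting $\pi(Q)=\max_{S\subseteq Q,|S|=k}\operatorname{div}(S)$, every $k$-subset $S\subseteq P$ with $\operatorname{div}(G(S))\ge\pi(G(P))/(1+\varepsilon)$ satisfies $\operatorname{div}(S)\ge\pi(P)/(1+C'\varepsilon)$.
   Context: Norms are Euclidean. A Gaussian JL map is a random $t\times d$ matrix with i.i.d. $\mathcal{N}(0,1/t)$ entries; $G(S)=\{Gs:s\in S\}$. The doubling dimension $\operatorname{ddim}(X)$ of $X\subset\mathbb{R}^d$ is the smallest $\lambda$ such that for every ball $B$ of radius $r$, $X\cap B$ can be covered by $2^\lambda$ balls of radius $r/2$. Property (P): there is a number $l\ge1$ such that for every $k$-point set $S$ there is a nonempty family $\mathcal{F}(S)$ of graphs on vertex set $S$, each having exactly $l$ edges (the family being defined combinatorially, i.e. transported along bijections of point sets), and $\operatorname{div}(S)$ equals either $\min_{H\in\mathcal{F}(S)}\sum_{\{x,y\}\in E(H)}\|x-y\|$ for all $S$, or $\max_{H\in\mathcal{F}(S)}\sum_{\{x,y\}\in E(H)}\|x-y\|$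 for all $S$. *)

theory Defs
  imports "HOL-Probability.Probability"
begin

text \<open>Points of R^d are represented as real lists of length d (the dimension d
varies inside the statement). Euclidean distance:\<close>

definition ldist :: "real list \<Rightarrow> real list \<Rightarrow> real" where
  "ldist x y = sqrt (\<Sum>i<length x. (x ! i - y ! i)\<^sup>2)"

definition lcball :: "real list \<Rightarrow> real \<Rightarrow> real list set" where
  "lcball c r = {x. length x = length c \<and> ldist c x \<le> r}"

definition ddim :: "nat \<Rightarrow> real list set \<Rightarrow> nat" where
  "ddim d X = (LEAST lam. \<forall>c r. length c = d \<and> r > 0 \<longrightarrow>
      (\<exists>Cs. finite Cs \<and> card Cs \<le> 2 ^ lam \<and> Cs \<subseteq> {x. length x = d} \<and>
             X \<inter> lcball c r \<subseteq> (\<Union>c'\<in>Cs. lcball c' (r / 2))))"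

text \<open>Gaussian JL map: t x d matrix with iid N(0,1/t) entries (standard deviation 1/sqrt t).\<close>

definition gauss_jl :: "nat \<Rightarrow> nat \<Rightarrow> (nat \<times> nat \<Rightarrow> real) measure" where
  "gauss_jl t d = PiM ({..<t} \<times> {..<d}) (\<lambda>_. density lborel (normal_density 0 (1 / sqrt (real t))))"

definition jl_apply :: "nat \<Rightarrow> nat \<Rightarrow> (nat \<times> nat \<Rightarrow> real) \<Rightarrow> real list \<Rightarrow> real list" where
  "jl_apply t d G x = map (\<lambda>i. \<Sum>j<d. G (i, j) * x ! j) [0..<t]"

text \<open>A graph on vertex set S: a set of 2-element subsets of S. Its total edge length
(each unordered edge counted once = half the sum over ordered pairs).\<close>

definition graph_weight :: "real list set set \<Rightarrow> real" where
  "graph_weight H = (\<Sum>p\<in>{(x, y). {x, y} \<in> H}. ldist (fst p) (snd p)) / 2"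

definition property_P :: "nat \<Rightarrow> nat \<Rightarrow> (real list set \<Rightarrow> real list set set set) \<Rightarrow> bool" where
  "property_P k l F \<longleftrightarrow> l \<ge> 1 \<and>
     (\<forall>S. finite S \<and> card S = k \<longrightarrow>
        F S \<noteq> {} \<and> (\<forall>H\<in>F S. H \<subseteq> {e. e \<subseteq> S \<and> card e = 2} \<and> card H = l)) \<and>
     (\<forall>S S' \<sigma>. finite S \<and> card S = k \<and> bij_betw \<sigma> S S' \<longrightarrow>
        F S' = (\<lambda>H. (\<lambda>e. \<sigma> ` e) ` H) ` F S)"

definition div_val :: "bool \<Rightarrow> (real list set \<Rightarrow> real list set set set) \<Rightarrow> real list set \<Rightarrow> real" where
  "div_val mx F S = (if mx then Max (graph_weight ` F S) else Min (graph_weight ` F S))"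

definition div_opt :: "nat \<Rightarrow> bool \<Rightarrow> (real list set \<Rightarrow> real list set set set) \<Rightarrow> real list set \<Rightarrow> real" where
  "div_opt k mx F Q = Max {div_val mx F S | S. S \<subseteq> Q \<and> card S = k}"

end

theory Submission
  imports Defs
begin


definition gvec :: "nat \<Rightarrow> (nat \<times> nat \<Rightarrow> real) \<Rightarrow> (nat \<Rightarrow> real) \<Rightarrow> nat \<Rightarrow> real" where
  "gvec d G v i = (\<Sum>j<d. G (i, j) * v j)"

lemma gauss_prob: "t > 0 \<Longrightarrow> prob_space (gauss_jl t d)"
  unfolding gauss_jl_def
  by (intro prob_space_PiM prob_space_normal_density) auto

lemma space_gauss: "space (gauss_jl t d) = ({..<t} \<times> {..<d}) \<rightarrow>\<^sub>E UNIV"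
  unfolding gauss_jl_def by (simp add: space_PiM)

lemma indep_coords:
  assumes "t > 0"
  shows "prob_space.indep_vars (gauss_jl t d) (\<lambda>_. borel) (\<lambda>c G. G c) ({..<t} \<times> {..<d})"
proof -
  interpret prob_space "gauss_jl t d" using gauss_prob[OF assms] .
  let ?I = "{..<t} \<times> {..<d}"
  let ?N = "density lborel (normal_density 0 (1 / sqrt (real t)))"
  have pN: "prob_space ?N" using assms by (intro prob_space_normal_density) auto
  show ?thesis
  proof (cases "?I = {}")
    case True then show ?thesis by (simp only: True) (simp add: indep_vars_def indep_sets_def)
  next
    case False
    have d1: "distr (gauss_jl t d) (\<Pi>\<^sub>M i\<in>?I. borel) (\<lambda>x. \<lambda>i\<in>?I. x i) = gauss_jl t d"
    proof -
      have "distr (gauss_jl t d) (\<Pi>\<^sub>M i\<in>?I. borel) (\<lambda>x. \<lambda>i\<in>?I. x i) = distr (gauss_jl t d) (gauss_jl t d) (\<lambda>x. x)"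
        apply (rule distr_cong)
        apply simp
        apply (simp add: gauss_jl_def, rule sets_PiM_cong, simp, simp)
        apply (auto simp: space_gauss restrict_def extensional_def PiE_def fun_eq_iff)
        done
      also have "\<dots> = gauss_jl t d" by (rule distr_id)
      finally show ?thesis .
    qed
    have d2: "distr (gauss_jl t d) borel (\<lambda>G. G i) = ?N" if "i \<in> ?I" for i
    proof -
      have "distr (gauss_jl t d) borel (\<lambda>G. G i) = distr (gauss_jl t d) ?N (\<lambda>G. G i)"
        by (rule distr_cong) auto
      also have "\<dots> = ?N" unfolding gauss_jl_def
        by (rule distr_PiM_component) (use pN that in auto)
      finally show ?thesis .
    qed
    have d3: "(\<Pi>\<^sub>M i\<in>?I. distr (gauss_jl t d) borel (\<lambda>G. G i)) = gauss_jl t d"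
      unfolding gauss_jl_def by (rule PiM_cong) (auto simp: d2[unfolded gauss_jl_def])
    have rv: "random_variable borel (\<lambda>G. G i)" for i
    proof (cases "i \<in> ?I")
      case True then show ?thesis unfolding gauss_jl_def by measurable
    next
      case False
      have "random_variable borel (\<lambda>G. undefined)" by simp
      then show ?thesis
        by (rule measurable_cong[THEN iffD1, rotated]) (use False in \<open>cases i; auto simp: space_gauss PiE_def extensional_def\<close>)
    qed
    show ?thesis
      unfolding indep_vars_iff_distr_eq_PiM[OF False rv] d1 d3 ..
  qed
qed

lemma sets_gauss: "sets (gauss_jl t d) = sets (\<Pi>\<^sub>M i\<in>{..<t} \<times> {..<d}. borel)"
  unfolding gauss_jl_def by (rule sets_PiM_cong) auto

lemma coord_meas[measurable]: "(\<lambda>G. G c) \<in> borel_measurable (gauss_jl t d)"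
proof (cases "c \<in> {..<t} \<times> {..<d}")
  case True then show ?thesis unfolding gauss_jl_def by measurable
next
  case False
  have "(\<lambda>G. undefined) \<in> borel_measurable (gauss_jl t d)" by simp
  then show ?thesis
    by (rule measurable_cong[THEN iffD1, rotated]) (use False in \<open>cases c; auto simp: space_gauss PiE_def extensional_def\<close>)
qed

lemma coord_distributed:
  assumes "t > 0" "c \<in> {..<t} \<times> {..<d}"
  shows "distributed (gauss_jl t d) lborel (\<lambda>G. G c) (normal_density 0 (1 / sqrt (real t)))"
proof -
  let ?N = "density lborel (normal_density 0 (1 / sqrt (real t)))"
  have pN: "prob_space ?N" using assms by (intro prob_space_normal_density) auto
  have "distr (gauss_jl t d) lborel (\<lambda>G. G c) = distr (gauss_jl t d) ?N (\<lambda>G. G c)"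
    by (rule distr_cong) auto
  also have "\<dots> = ?N" unfolding gauss_jl_def
    by (rule distr_PiM_component) (use pN assms in auto)
  finally show ?thesis unfolding distributed_def by auto
qed

lemma block_indep:
  assumes "t > 0" "\<And>j. j \<in> L \<Longrightarrow> K j \<subseteq> {..<t} \<times> {..<d}" "disjoint_family_on K L"
    "\<And>j. j \<in> L \<Longrightarrow> f j \<in> borel_measurable (Pi\<^sub>M (K j) (\<lambda>_. borel))"
  shows "prob_space.indep_vars (gauss_jl t d) (\<lambda>_. borel) (\<lambda>j G. f j (restrict G (K j))) L"
proof -
  interpret prob_space "gauss_jl t d" using gauss_prob[OF assms(1)] .
  have "indep_vars (\<lambda>j. Pi\<^sub>M (K j) (\<lambda>_. borel)) (\<lambda>j \<omega>. restrict (\<lambda>i. \<omega> i) (K j)) L"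
    by (rule indep_vars_restrict[OF indep_coords[OF assms(1)] assms(2,3)])
  from indep_vars_compose2[OF this assms(4)] show ?thesis by simp
qed

lemma row_normal:
  assumes t: "t > 0" and i: "i < t" and J: "{j. j < d \<and> v j \<noteq> 0} \<noteq> {}"
  shows "distributed (gauss_jl t d) lborel (\<lambda>G. gvec d G v i)
           (normal_density 0 (sqrt (\<Sum>j<d. (v j)\<^sup>2) / sqrt (real t)))"
proof -
  interpret prob_space "gauss_jl t d" using gauss_prob[OF t] .
  define J where "J = {j. j < d \<and> v j \<noteq> 0}"
  define \<sigma> where "\<sigma> = 1 / sqrt (real t)"
  have \<sigma>: "\<sigma> > 0" using t by (simp add: \<sigma>_def)
  have fJ: "finite J" by (simp add: J_def)
  have eq: "gvec d G v i = (\<Sum>j\<in>J. v j * G (i, j))" for G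
    unfolding gvec_def J_def
    by (rule sum.mono_neutral_cong_right) auto
  have ind0: "indep_vars (\<lambda>_. borel) (\<lambda>j G. (\<lambda>h. v j * h (i, j)) (restrict G {(i,j)})) J"
    by (rule block_indep[OF t]) (auto simp: J_def i disjoint_family_on_def)
  have ind: "indep_vars (\<lambda>_. borel) (\<lambda>j G. v j * G (i, j)) J"
    using ind0 by simp
  have dist: "distributed (gauss_jl t d) lborel (\<lambda>G. v j * G (i, j)) (normal_density 0 (\<bar>v j\<bar> * \<sigma>))"
    if "j \<in> J" for j
    using normal_density_affine[OF coord_distributed[OF t, of "(i,j)"], of "v j" 0] that i
    by (auto simp: J_def \<sigma>_def)
  have "distributed (gauss_jl t d) lborel (\<lambda>x. \<Sum>j\<in>J. v j * x (i, j))
          (normal_density (\<Sum>j\<in>J. 0) (sqrt (\<Sum>j\<in>J. (\<bar>v j\<bar> * \<sigma>)\<^sup>2)))"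
    by (rule sum_indep_normal[OF fJ J[folded J_def] ind _ dist]) (use \<sigma> in \<open>auto simp: J_def\<close>)
  moreover have "(\<Sum>j\<in>J. (\<bar>v j\<bar> * \<sigma>)\<^sup>2) = (\<Sum>j<d. (v j)\<^sup>2) * \<sigma>\<^sup>2"
    unfolding sum_distrib_right power_mult_distrib power2_abs J_def
    by (rule sum.mono_neutral_cong_left) auto
  ultimately show ?thesis
    using \<sigma> by (simp add: eq real_sqrt_mult \<sigma>_def)
qed



lemma normal_mgf_sq:
  assumes s: "s > 0" and a: "2 * \<theta> * s\<^sup>2 < 1"
  shows "(\<integral>\<^sup>+x. ennreal (normal_density 0 s x) * ennreal (exp (\<theta> * x\<^sup>2)) \<partial>lborel)
         = ennreal (1 / sqrt (1 - 2 * \<theta> * s\<^sup>2))"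
proof -
  define a where "a = 1 - 2 * \<theta> * s\<^sup>2"
  have a0: "a > 0" using a by (simp add: a_def)
  define s' where "s' = s / sqrt a"
  have s'0: "s' > 0" using s a0 by (simp add: s'_def)
  have pt: "normal_density 0 s x * exp (\<theta> * x\<^sup>2) = (1 / sqrt a) * normal_density 0 s' x" for x
  proof -
    have e: "- x\<^sup>2 / (2 * s\<^sup>2) + \<theta> * x\<^sup>2 = - x\<^sup>2 / (2 * s'\<^sup>2)"
      using s a0 by (simp add: s'_def a_def power_divide field_simps)
    have "normal_density 0 s x * exp (\<theta> * x\<^sup>2) = 1 / sqrt (2 * pi * s\<^sup>2) * exp (- x\<^sup>2 / (2 * s'\<^sup>2))"
    proof -
      have ee: "exp (- x\<^sup>2 / (2 * s\<^sup>2)) * exp (\<theta> * x\<^sup>2) = exp (- x\<^sup>2 / (2 * s'\<^sup>2))"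
        by (simp only: mult_exp_exp e)
      show ?thesis unfolding normal_density_def using ee by (simp add: mult.assoc)
    qed
    also have "1 / sqrt (2 * pi * s\<^sup>2) = (1 / sqrt a) * (1 / sqrt (2 * pi * s'\<^sup>2))"
      using s a0 by (simp add: s'_def power_divide real_sqrt_mult real_sqrt_divide field_simps)
    finally show ?thesis unfolding normal_density_def by simp
  qed
  have "(\<integral>\<^sup>+x. ennreal (normal_density 0 s x) * ennreal (exp (\<theta> * x\<^sup>2)) \<partial>lborel)
       = (\<integral>\<^sup>+x. ennreal (1 / sqrt a) * ennreal (normal_density 0 s' x) \<partial>lborel)"
  proof (intro nn_integral_cong)
    fix x
    have "ennreal (normal_density 0 s x) * ennreal (exp (\<theta> * x\<^sup>2)) = ennreal (normal_density 0 s x * exp (\<theta> * x\<^sup>2))"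
      by (rule ennreal_mult[symmetric]) auto
    also have "\<dots> = ennreal (1 / sqrt a) * ennreal (normal_density 0 s' x)"
      unfolding pt by (rule ennreal_mult) (use a0 in auto)
    finally show "ennreal (normal_density 0 s x) * ennreal (exp (\<theta> * x\<^sup>2)) = ennreal (1 / sqrt a) * ennreal (normal_density 0 s' x)" .
  qed
  also have "\<dots> = ennreal (1 / sqrt a) * (\<integral>\<^sup>+x. ennreal (normal_density 0 s' x) \<partial>lborel)"
    by (rule nn_integral_cmult) simp
  also have "(\<integral>\<^sup>+x. ennreal (normal_density 0 s' x) \<partial>lborel) = 1"
    by (subst nn_integral_eq_integral) (auto simp: normal_density_nonneg integrable_normal_density[OF s'0] integral_normal_density[OF s'0])
  finally show ?thesis by (simp add: a_def)
qed

lemma Y_mgf: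
  assumes t: "t > 0" and J: "{j. j < d \<and> v j \<noteq> 0} \<noteq> {}"
    and th: "2 * \<theta> * ((\<Sum>j<d. (v j)\<^sup>2) / real t) < 1"
  shows "(\<integral>\<^sup>+G. ennreal (exp (\<theta> * (\<Sum>i<t. (gvec d G v i)\<^sup>2))) \<partial>gauss_jl t d)
         = ennreal ((1 / sqrt (1 - 2 * \<theta> * ((\<Sum>j<d. (v j)\<^sup>2) / real t))) ^ t)"
proof -
  interpret prob_space "gauss_jl t d" using gauss_prob[OF t] .
  define nv2 where "nv2 = (\<Sum>j<d. (v j)\<^sup>2)"
  define s where "s = sqrt nv2 / sqrt (real t)"
  have nv2: "nv2 > 0"
  proof -
    from J obtain j where j: "j < d" "v j \<noteq> 0" by auto
    have "(v j)\<^sup>2 \<le> nv2" unfolding nv2_def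
      by (rule member_le_sum[of j "{..<d}" "\<lambda>j. (v j)\<^sup>2"]) (use j in auto)
    moreover have "(v j)\<^sup>2 > 0" using j by simp
    ultimately show ?thesis by linarith
  qed
  have s0: "s > 0" using nv2 t by (simp add: s_def)
  have s2: "s\<^sup>2 = nv2 / real t" using nv2 by (simp add: s_def power_divide)
  have ind: "indep_vars (\<lambda>_. borel) (\<lambda>i G. (\<lambda>h. exp (\<theta> * (\<Sum>j<d. h (i, j) * v j)\<^sup>2)) (restrict G ({i} \<times> {..<d}))) {..<t}"
    by (rule block_indep[OF t]) (auto simp: disjoint_family_on_def)
  have ind': "indep_vars (\<lambda>_. borel) (\<lambda>i G. exp (\<theta> * (gvec d G v i)\<^sup>2)) {..<t}"
    using ind by (simp add: gvec_def)
  have ind'': "indep_vars (\<lambda>_. borel) (\<lambda>i G. ennreal (exp (\<theta> * (gvec d G v i)\<^sup>2))) {..<t}"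
    using indep_vars_compose2[OF ind', of "\<lambda>i x. ennreal x" "\<lambda>_. borel"] by simp
  have "(\<integral>\<^sup>+G. ennreal (exp (\<theta> * (\<Sum>i<t. (gvec d G v i)\<^sup>2))) \<partial>gauss_jl t d)
        = (\<integral>\<^sup>+G. (\<Prod>i<t. ennreal (exp (\<theta> * (gvec d G v i)\<^sup>2))) \<partial>gauss_jl t d)"
    by (simp add: sum_distrib_left exp_sum prod_ennreal)
  also have "\<dots> = (\<Prod>i<t. \<integral>\<^sup>+G. ennreal (exp (\<theta> * (gvec d G v i)\<^sup>2)) \<partial>gauss_jl t d)"
    by (rule indep_vars_nn_integral[OF _ ind'']) auto
  also have "\<dots> = (\<Prod>i<t. ennreal (1 / sqrt (1 - 2 * \<theta> * s\<^sup>2)))"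
  proof (rule prod.cong[OF refl])
    fix i assume i: "i \<in> {..<t}"
    have D: "distributed (gauss_jl t d) lborel (\<lambda>G. gvec d G v i) (normal_density 0 s)"
      using row_normal[OF t _ J, of i] i by (simp add: s_def nv2_def)
    have "(\<integral>\<^sup>+G. ennreal (exp (\<theta> * (gvec d G v i)\<^sup>2)) \<partial>gauss_jl t d)
          = (\<integral>\<^sup>+x. ennreal (normal_density 0 s x) * ennreal (exp (\<theta> * x\<^sup>2)) \<partial>lborel)"
      by (rule distributed_nn_integral[OF D, symmetric]) simp
    also have "\<dots> = ennreal (1 / sqrt (1 - 2 * \<theta> * s\<^sup>2))"
      by (rule normal_mgf_sq[OF s0]) (use th in \<open>simp add: s2 nv2_def\<close>)
    finally show "(\<integral>\<^sup>+G. ennreal (exp (\<theta> * (gvec d G v i)\<^sup>2)) \<partial>gauss_jl t d) = ennreal (1 / sqrt (1 - 2 * \<theta> * s\<^sup>2))" .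
  qed
  also have "\<dots> = ennreal ((1 / sqrt (1 - 2 * \<theta> * s\<^sup>2)) ^ t)"
    by (simp, rule ennreal_power) (use th in \<open>simp add: s2 nv2_def\<close>)
  finally show ?thesis by (simp add: s2 nv2_def)
qed

lemma Y_meas[measurable]: "(\<lambda>G. \<Sum>i<t. (gvec d G v i)\<^sup>2) \<in> borel_measurable (gauss_jl t d)"
  unfolding gvec_def by measurable

lemma mgf_value:
  assumes t: "t > 0" and nv2: "nv2 > 0" and a: "a > 0"
  shows "exp (- ((real t * (1 - 1 / a) / (2 * nv2)) * (a * nv2))) *
         (1 / sqrt (1 - 2 * (real t * (1 - 1 / a) / (2 * nv2)) * (nv2 / real t))) ^ t
       = exp (- (real t / 2) * (a - 1 - ln a))"
proof -
  have e1: "(real t * (1 - 1 / a) / (2 * nv2)) * (a * nv2) = real t * (a - 1) / 2"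
    using nv2 a by (simp add: field_simps)
  have e2: "1 - 2 * (real t * (1 - 1 / a) / (2 * nv2)) * (nv2 / real t) = 1 / a"
    using nv2 a t by (simp add: field_simps)
  have e3: "(1 / sqrt (1 / a)) ^ t = exp (real t * (ln a / 2))"
  proof -
    have "1 / sqrt (1 / a) = sqrt a" using a by (simp add: real_sqrt_divide)
    also have "sqrt a = a powr (1/2)" using a by (simp add: powr_half_sqrt)
    also have "\<dots> = exp (ln a / 2)" using a by (simp add: powr_def)
    finally show ?thesis by (simp only: exp_of_nat_mult)
  qed
  show ?thesis unfolding e1 e2 e3 mult_exp_exp[symmetric] by (simp add: exp_add[symmetric] algebra_simps add_divide_distrib diff_divide_distrib)
qed

lemma nv2_J: "(\<Sum>j<d. (v j)\<^sup>2) > (0::real) \<Longrightarrow> {j. j < d \<and> v j \<noteq> 0} \<noteq> {}"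
proof
  assume "(\<Sum>j<d. (v j)\<^sup>2) > (0::real)" "{j. j < d \<and> v j \<noteq> 0} = {}"
  then show False by (simp add: sum.neutral)
qed

lemma tail_upper:
  assumes t: "t > 0" and nv2: "(\<Sum>j<d. (v j)\<^sup>2) > 0" and a: "a > 1"
  shows "measure (gauss_jl t d) {G \<in> space (gauss_jl t d). a * (\<Sum>j<d. (v j)\<^sup>2) \<le> (\<Sum>i<t. (gvec d G v i)\<^sup>2)}
         \<le> exp (- (real t / 2) * (a - 1 - ln a))"
proof -
  interpret prob_space "gauss_jl t d" using gauss_prob[OF t] .
  define nv where "nv = (\<Sum>j<d. (v j)\<^sup>2)"
  define \<theta> where "\<theta> = real t * (1 - 1 / a) / (2 * nv)"
  have nv: "nv > 0" using nv2 by (simp add: nv_def)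
  have th: "\<theta> > 0" using t a nv by (simp add: \<theta>_def field_simps)
  have th1: "2 * \<theta> * (nv / real t) < 1" using t a nv by (simp add: \<theta>_def field_simps)
  let ?Y = "\<lambda>G. \<Sum>i<t. (gvec d G v i)\<^sup>2"
  have "emeasure (gauss_jl t d) {G \<in> space (gauss_jl t d). ?Y G \<ge> a * nv}
        \<le> ennreal (exp (- \<theta> * (a * nv))) * (\<integral>\<^sup>+G. ennreal (exp (\<theta> * ?Y G)) * indicator (space (gauss_jl t d)) G \<partial>gauss_jl t d)"
    by (rule Chernoff_ineq_nn_integral_ge[OF th]) auto
  also have "(\<integral>\<^sup>+G. ennreal (exp (\<theta> * ?Y G)) * indicator (space (gauss_jl t d)) G \<partial>gauss_jl t d)
           = (\<integral>\<^sup>+G. ennreal (exp (\<theta> * ?Y G)) \<partial>gauss_jl t d)"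
    by (rule nn_integral_cong) simp
  also have "\<dots> = ennreal ((1 / sqrt (1 - 2 * \<theta> * (nv / real t))) ^ t)"
    using Y_mgf[OF t nv2_J[OF nv2], of \<theta>] th1 by (simp add: nv_def)
  also have "ennreal (exp (- \<theta> * (a * nv))) * \<dots> = ennreal (exp (- (real t / 2) * (a - 1 - ln a)))"
    using mgf_value[OF t nv, of a] a th1 by (simp add: \<theta>_def ennreal_mult[symmetric])
  finally show ?thesis
    by (simp add: emeasure_eq_measure nv_def)
qed

lemma tail_lower:
  assumes t: "t > 0" and nv2: "(\<Sum>j<d. (v j)\<^sup>2) > 0" and a: "0 < a" "a < 1"
  shows "measure (gauss_jl t d) {G \<in> space (gauss_jl t d). (\<Sum>i<t. (gvec d G v i)\<^sup>2) \<le> a * (\<Sum>j<d. (v j)\<^sup>2)}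
         \<le> exp (- (real t / 2) * (a - 1 - ln a))"
proof -
  interpret prob_space "gauss_jl t d" using gauss_prob[OF t] .
  define nv where "nv = (\<Sum>j<d. (v j)\<^sup>2)"
  define \<theta> where "\<theta> = real t * (1 - 1 / a) / (2 * nv)"
  have nv: "nv > 0" using nv2 by (simp add: nv_def)
  have th: "- \<theta> > 0" using t a nv by (simp add: \<theta>_def field_simps)
  have th1: "2 * \<theta> * (nv / real t) < 1" using t a nv by (simp add: \<theta>_def field_simps)
  let ?Y = "\<lambda>G. \<Sum>i<t. (gvec d G v i)\<^sup>2"
  have "emeasure (gauss_jl t d) {G \<in> space (gauss_jl t d). ?Y G \<le> a * nv}
        \<le> ennreal (exp ((- \<theta>) * (a * nv))) * (\<integral>\<^sup>+G. ennreal (exp (- (- \<theta>) * ?Y G)) * indicator (space (gauss_jl t d)) G \<partial>gauss_jl t d)"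
    by (rule Chernoff_ineq_nn_integral_le[OF th]) auto
  also have "(\<integral>\<^sup>+G. ennreal (exp (- (- \<theta>) * ?Y G)) * indicator (space (gauss_jl t d)) G \<partial>gauss_jl t d)
           = (\<integral>\<^sup>+G. ennreal (exp (\<theta> * ?Y G)) \<partial>gauss_jl t d)"
    by (rule nn_integral_cong) simp
  also have "\<dots> = ennreal ((1 / sqrt (1 - 2 * \<theta> * (nv / real t))) ^ t)"
    using Y_mgf[OF t nv2_J[OF nv2], of \<theta>] th1 by (simp add: nv_def)
  also have "ennreal (exp ((- \<theta>) * (a * nv))) * \<dots> = ennreal (exp (- (real t / 2) * (a - 1 - ln a)))"
    using mgf_value[OF t nv, of a] a th1 by (simp add: \<theta>_def ennreal_mult[symmetric])
  finally show ?thesis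
    by (simp add: emeasure_eq_measure nv_def)
qed



lemma ldist_nonneg[simp]: "ldist x y \<ge> 0"
  unfolding ldist_def by (simp add: sum_nonneg)

lemma jl_dist: "ldist (jl_apply t d G x) (jl_apply t d G y) = sqrt (\<Sum>i<t. (gvec d G (\<lambda>j. x ! j - y ! j) i)\<^sup>2)"
  unfolding ldist_def jl_apply_def gvec_def
  by (simp add: sum_subtractf right_diff_distrib)

lemma ldist_d: "length x = d \<Longrightarrow> ldist x y = sqrt (\<Sum>j<d. (x ! j - y ! j)\<^sup>2)"
  unfolding ldist_def by simp

lemma gd_meas[measurable]: "(\<lambda>G. ldist (jl_apply t d G x) (jl_apply t d G y)) \<in> borel_measurable (gauss_jl t d)"
  unfolding jl_dist gvec_def by measurable

lemma nv2_pos: "length (x::real list) = d \<Longrightarrow> length y = d \<Longrightarrow> x \<noteq> y \<Longrightarrow> (\<Sum>j<d. (x ! j - y ! j)\<^sup>2) > 0"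
proof -
  assume l: "length x = d" "length y = d" "x \<noteq> y"
  then obtain j where j: "j < d" "x ! j \<noteq> y ! j" by (metis nth_equalityI)
  have "(x ! j - y ! j)\<^sup>2 \<le> (\<Sum>j<d. (x ! j - y ! j)\<^sup>2)"
    by (rule member_le_sum[of j "{..<d}" "\<lambda>j. (x ! j - y ! j)\<^sup>2"]) (use j in auto)
  moreover have "(x ! j - y ! j)\<^sup>2 > 0" using j by simp
  ultimately show ?thesis by linarith
qed

lemma h_bound: "(s::real) > 0 \<Longrightarrow> (s - 1)\<^sup>2 \<le> s\<^sup>2 - 1 - ln (s\<^sup>2)"
proof -
  assume s: "s > 0"
  have "ln s \<le> s - 1" using s by (rule ln_le_minus_one)
  moreover have "ln (s\<^sup>2) = 2 * ln s" using s by (simp add: ln_realpow)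
  ultimately show ?thesis by (simp add: power2_eq_square algebra_simps)
qed

lemma prob_expand:
  assumes t: "t > 0" and l: "length x = d" "length y = d" "x \<noteq> y" and s: "s > 1"
  shows "measure (gauss_jl t d) {G \<in> space (gauss_jl t d). s * ldist x y \<le> ldist (jl_apply t d G x) (jl_apply t d G y)}
         \<le> exp (- (real t / 2) * (s - 1)\<^sup>2)"
proof -
  interpret prob_space "gauss_jl t d" using gauss_prob[OF t] .
  define v where "v = (\<lambda>j. x ! j - y ! j)"
  have nv: "(\<Sum>j<d. (v j)\<^sup>2) > 0" using nv2_pos[OF l] by (simp add: v_def)
  have "{G \<in> space (gauss_jl t d). s * ldist x y \<le> ldist (jl_apply t d G x) (jl_apply t d G y)}
      = {G \<in> space (gauss_jl t d). s\<^sup>2 * (\<Sum>j<d. (v j)\<^sup>2) \<le> (\<Sum>i<t. (gvec d G v i)\<^sup>2)}"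
  proof -
    have "s * ldist x y \<le> ldist (jl_apply t d G x) (jl_apply t d G y) \<longleftrightarrow> s\<^sup>2 * (\<Sum>j<d. (v j)\<^sup>2) \<le> (\<Sum>i<t. (gvec d G v i)\<^sup>2)" for G
    proof -
      have "s * ldist x y = sqrt (s\<^sup>2 * (\<Sum>j<d. (v j)\<^sup>2))"
        using s l by (simp add: ldist_d v_def real_sqrt_mult)
      then show ?thesis unfolding jl_dist v_def[symmetric] by simp
    qed
    then show ?thesis by auto
  qed
  also have "measure (gauss_jl t d) \<dots> \<le> exp (- (real t / 2) * (s\<^sup>2 - 1 - ln (s\<^sup>2)))"
    by (rule tail_upper[OF t nv]) (use s in \<open>simp add: one_less_power\<close>)
  also have "\<dots> \<le> exp (- (real t / 2) * (s - 1)\<^sup>2)"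
    using h_bound[of s] s t by (simp add: mult_left_mono)
  finally show ?thesis .
qed

lemma prob_contract:
  assumes t: "t > 0" and l: "length x = d" "length y = d" "x \<noteq> y" and s: "0 < s" "s < 1"
  shows "measure (gauss_jl t d) {G \<in> space (gauss_jl t d). ldist (jl_apply t d G x) (jl_apply t d G y) \<le> s * ldist x y}
         \<le> exp (- (real t / 2) * (s\<^sup>2 - 1 - ln (s\<^sup>2)))"
proof -
  interpret prob_space "gauss_jl t d" using gauss_prob[OF t] .
  define v where "v = (\<lambda>j. x ! j - y ! j)"
  have nv: "(\<Sum>j<d. (v j)\<^sup>2) > 0" using nv2_pos[OF l] by (simp add: v_def)
  have "{G \<in> space (gauss_jl t d). ldist (jl_apply t d G x) (jl_apply t d G y) \<le> s * ldist x y}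
      = {G \<in> space (gauss_jl t d). (\<Sum>i<t. (gvec d G v i)\<^sup>2) \<le> s\<^sup>2 * (\<Sum>j<d. (v j)\<^sup>2)}"
  proof -
    have "ldist (jl_apply t d G x) (jl_apply t d G y) \<le> s * ldist x y \<longleftrightarrow> (\<Sum>i<t. (gvec d G v i)\<^sup>2) \<le> s\<^sup>2 * (\<Sum>j<d. (v j)\<^sup>2)" for G
    proof -
      have "s * ldist x y = sqrt (s\<^sup>2 * (\<Sum>j<d. (v j)\<^sup>2))"
        using s l by (simp add: ldist_d v_def real_sqrt_mult)
      then show ?thesis unfolding jl_dist v_def[symmetric] by simp
    qed
    then show ?thesis by auto
  qed
  also have "measure (gauss_jl t d) \<dots> \<le> exp (- (real t / 2) * (s\<^sup>2 - 1 - ln (s\<^sup>2)))"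
    by (rule tail_lower[OF t nv]) (use s in \<open>simp_all add: power_less_one_iff\<close>)
  finally show ?thesis .
qed

lemma prob_contract':
  assumes t: "t > 0" and l: "length x = d" "length y = d" "x \<noteq> y" and s: "0 < s" "s < 1"
  shows "measure (gauss_jl t d) {G \<in> space (gauss_jl t d). ldist (jl_apply t d G x) (jl_apply t d G y) \<le> s * ldist x y}
         \<le> exp (- (real t / 2) * (s - 1)\<^sup>2)"
proof -
  have "(real t / 2) * (s - 1)\<^sup>2 \<le> (real t / 2) * (s\<^sup>2 - 1 - ln (s\<^sup>2))"
    by (rule mult_left_mono[OF h_bound]) (use s in auto)
  then have "exp (- (real t / 2) * (s\<^sup>2 - 1 - ln (s\<^sup>2))) \<le> exp (- (real t / 2) * (s - 1)\<^sup>2)" by simp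
  with prob_contract[OF assms] show ?thesis by linarith
qed

lemma prob_collapse:
  assumes t: "t > 0" and l: "length x = d" "length y = d" "x \<noteq> y"
  shows "measure (gauss_jl t d) {G \<in> space (gauss_jl t d). ldist (jl_apply t d G x) (jl_apply t d G y) \<le> 0} = 0"
proof -
  let ?E = "{G \<in> space (gauss_jl t d). ldist (jl_apply t d G x) (jl_apply t d G y) \<le> 0}"
  have le: "measure (gauss_jl t d) ?E \<le> \<eta>" if \<eta>: "\<eta> > 0" for \<eta>
  proof -
    define s where "s = sqrt (exp (-1 - 2 * \<bar>ln \<eta>\<bar> / real t))"
    have s0: "s > 0" by (simp add: s_def)
    have "0 \<le> 2 * \<bar>ln \<eta>\<bar> / real t" by simp
    then have "-1 - 2 * \<bar>ln \<eta>\<bar> / real t < 0" by linarith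
    then have s1: "s < 1" unfolding s_def by simp
    have lns: "ln (s\<^sup>2) = -1 - 2 * \<bar>ln \<eta>\<bar> / real t" by (simp add: s_def)
    have "?E \<subseteq> {G \<in> space (gauss_jl t d). ldist (jl_apply t d G x) (jl_apply t d G y) \<le> s * ldist x y}"
    proof safe
      fix G assume "G \<in> space (gauss_jl t d)" "ldist (jl_apply t d G x) (jl_apply t d G y) \<le> 0"
      moreover have "0 \<le> s * ldist x y" using s0 by simp
      ultimately show "ldist (jl_apply t d G x) (jl_apply t d G y) \<le> s * ldist x y" by linarith
    qed
    then have "measure (gauss_jl t d) ?E \<le> measure (gauss_jl t d) {G \<in> space (gauss_jl t d). ldist (jl_apply t d G x) (jl_apply t d G y) \<le> s * ldist x y}"
      by (intro finite_measure.finite_measure_mono prob_space.finite_measure[OF gauss_prob[OF t]]) measurable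
    also have "\<dots> \<le> exp (- (real t / 2) * (s\<^sup>2 - 1 - ln (s\<^sup>2)))"
      by (rule prob_contract[OF t l s0 s1])
    also have "\<dots> \<le> exp (ln \<eta>)"
    proof -
      have "- (real t / 2) * (s\<^sup>2 - 1 - ln (s\<^sup>2)) = - (real t / 2) * s\<^sup>2 - real t / 2 * \<bar>ln \<eta>\<bar> * 2 / real t"
        unfolding lns using t by (simp add: algebra_simps)
      also have "\<dots> \<le> - \<bar>ln \<eta>\<bar>" using t by simp
      also have "\<dots> \<le> ln \<eta>" by simp
      finally show ?thesis by simp
    qed
    finally show ?thesis using \<eta> by simp
  qed
  have "\<not> measure (gauss_jl t d) ?E > 0"
  proof
    assume h: "measure (gauss_jl t d) ?E > 0"
    from le[of "measure (gauss_jl t d) ?E / 2"] h show False by simp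
  qed
  moreover have "measure (gauss_jl t d) ?E \<ge> 0" by simp
  ultimately show ?thesis by linarith
qed



lemma ldist_L2: "ldist x y = L2_set (\<lambda>i. x ! i - y ! i) {..<length x}"
  unfolding ldist_def L2_set_def by simp

lemma ldist_self[simp]: "ldist x x = 0"
  unfolding ldist_def by simp

lemma ldist_sym: "length x = length y \<Longrightarrow> ldist x y = ldist y x"
  unfolding ldist_def by (simp add: power2_commute)

lemma ldist_triangle:
  assumes "length x = length y" "length y = length z"
  shows "ldist x z \<le> ldist x y + ldist y z"
proof -
  have "ldist x z = L2_set (\<lambda>i. (x ! i - y ! i) + (y ! i - z ! i)) {..<length x}"
    unfolding ldist_L2 by simp
  also have "\<dots> \<le> L2_set (\<lambda>i. x ! i - y ! i) {..<length x} + L2_set (\<lambda>i. y ! i - z ! i) {..<length x}"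
    by (rule L2_set_triangle_ineq)
  also have "\<dots> = ldist x y + ldist y z" unfolding ldist_L2 using assms by simp
  finally show ?thesis .
qed

lemma ldist_eq0: "length x = length y \<Longrightarrow> ldist x y = 0 \<Longrightarrow> x = y"
  unfolding ldist_L2 by (auto simp: L2_set_eq_0_iff intro: nth_equalityI)

lemma ldist_pos: "length x = length y \<Longrightarrow> x \<noteq> y \<Longrightarrow> ldist x y > 0"
  using ldist_eq0 ldist_nonneg by (metis order_le_less)

lemma length_jl[simp]: "length (jl_apply t d G x) = t"
  unfolding jl_apply_def by simp



lemma ddim_prop:
  assumes fin: "finite P" and Pd: "P \<subseteq> {x. length x = d}"
  shows "\<forall>c r. length c = d \<and> r > 0 \<longrightarrow>
      (\<exists>Cs. finite Cs \<and> card Cs \<le> 2 ^ ddim d P \<and> Cs \<subseteq> {x. length x = d} \<and>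
             P \<inter> lcball c r \<subseteq> (\<Union>c'\<in>Cs. lcball c' (r / 2)))"
  unfolding ddim_def
proof (rule LeastI_ex)
  show "\<exists>lam. \<forall>c r. length c = d \<and> r > 0 \<longrightarrow>
      (\<exists>Cs. finite Cs \<and> card Cs \<le> 2 ^ lam \<and> Cs \<subseteq> {x. length x = d} \<and>
             P \<inter> lcball c r \<subseteq> (\<Union>c'\<in>Cs. lcball c' (r / 2)))"
  proof (intro exI[of _ "card P"] allI impI)
    fix c :: "real list" and r :: real assume cr: "length c = d \<and> r > 0"
    have "card (P \<inter> lcball c r) \<le> card P" by (rule card_mono[OF fin]) auto
    also have "\<dots> \<le> 2 ^ card P" by (simp add: less_imp_le)
    finally have c: "card (P \<inter> lcball c r) \<le> 2 ^ card P" .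
    have "P \<inter> lcball c r \<subseteq> (\<Union>c'\<in>P \<inter> lcball c r. lcball c' (r / 2))"
      using cr by (auto simp: lcball_def)
    then show "\<exists>Cs. finite Cs \<and> card Cs \<le> 2 ^ card P \<and> Cs \<subseteq> {x. length x = d} \<and>
             P \<inter> lcball c r \<subseteq> (\<Union>c'\<in>Cs. lcball c' (r / 2))"
      using c fin Pd by (intro exI[of _ "P \<inter> lcball c r"]) auto
  qed
qed

lemma packing:
  assumes fin: "finite P" and Pd: "P \<subseteq> {x. length x = d}" and k: "k \<ge> 2" "card P \<ge> k"
  obtains r Ss Z where "r > 0" "Ss \<subseteq> P" "card Ss = k" "\<forall>x\<in>Ss. \<forall>y\<in>Ss. x \<noteq> y \<longrightarrow> r \<le> ldist x y"
    "Z \<subseteq> P" "card Z \<le> k - 1" "\<forall>x\<in>P. \<exists>z\<in>Z. ldist z x \<le> r"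
proof -
  define prs where "prs S = {ldist x y | x y. x \<in> S \<and> y \<in> S \<and> x \<noteq> y}" for S
  define ms where "ms S = Min (prs S)" for S
  define Ks where "Ks = {S. S \<subseteq> P \<and> card S = k}"
  have finKs: "finite Ks" unfolding Ks_def using fin by (rule finite_subset[rotated, OF finite_Pow_iff[THEN iffD2]]) auto
  obtain S0 where S0: "S0 \<subseteq> P" "card S0 = k" using obtain_subset_with_card_n[OF k(2)] by metis
  have neKs: "Ks \<noteq> {}" using S0 unfolding Ks_def by auto
  have prs_fin: "finite (prs S)" if "finite S" for S
  proof -
    have "prs S \<subseteq> (\<lambda>(x, y). ldist x y) ` (S \<times> S)" unfolding prs_def by auto
    then show ?thesis using that by (meson finite_SigmaI finite_imageI finite_subset)
  qed
  have prs_ne: "prs S \<noteq> {}" if "S \<in> Ks" for S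
  proof -
    from that have "card S \<ge> 2" "finite S" using k fin unfolding Ks_def by (auto intro: finite_subset)
    then obtain x y where "x \<in> S" "y \<in> S" "x \<noteq> y"
      by (metis card_2_iff' card_le_Suc_iff numeral_2_eq_2 Suc_le_D obtain_subset_with_card_n subset_iff)
    then show ?thesis unfolding prs_def by auto
  qed
  have finS: "finite S" if "S \<in> Ks" for S using that fin unfolding Ks_def by (auto intro: finite_subset)
  define r where "r = Max (ms ` Ks)"
  have "r \<in> ms ` Ks" unfolding r_def using finKs neKs by (intro Max_in) auto
  then obtain Ss where Ss: "Ss \<in> Ks" "ms Ss = r" by (metis imageE)
  have ms_le: "ms S \<le> ldist x y" if "S \<in> Ks" "x \<in> S" "y \<in> S" "x \<noteq> y" for S x y
    unfolding ms_def using that by (intro Min_le prs_fin finS) (auto simp: prs_def)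
  have ms_in: "ms S \<in> prs S" if "S \<in> Ks" for S
    unfolding ms_def using that by (intro Min_in prs_fin finS prs_ne)
  have r_ge: "ms S \<le> r" if "S \<in> Ks" for S
    unfolding r_def using that finKs by (intro Max_ge) auto
  have rpos: "r > 0"
  proof -
    from ms_in[OF Ss(1)] obtain x y where "x \<in> Ss" "y \<in> Ss" "x \<noteq> y" "ms Ss = ldist x y"
      unfolding prs_def by auto
    moreover have "length x = length y" using \<open>x \<in> Ss\<close> \<open>y \<in> Ss\<close> Ss(1) Pd unfolding Ks_def by auto
    ultimately show ?thesis using Ss(2) ldist_pos by metis
  qed
  define Zs where "Zs = {Z. Z \<subseteq> P \<and> (\<forall>x\<in>Z. \<forall>y\<in>Z. x \<noteq> y \<longrightarrow> r < ldist x y)}"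
  have finZs: "finite Zs" unfolding Zs_def using fin by (rule finite_subset[rotated, OF finite_Pow_iff[THEN iffD2]]) auto
  have "{} \<in> Zs" unfolding Zs_def by auto
  then obtain Z where Z: "Z \<in> Zs" "\<forall>Z'\<in>Zs. card Z' \<le> card Z"
    using Max_in[of "card ` Zs"] Max_ge[of "card ` Zs"] finZs by (metis (no_types, lifting) empty_iff finite_imageI image_iff image_is_empty)
  have finZ: "finite Z" using Z(1) fin unfolding Zs_def by (auto intro: finite_subset)
  have cZ: "card Z \<le> k - 1"
  proof (rule ccontr)
    assume "\<not> card Z \<le> k - 1"
    then have "k \<le> card Z" by simp
    then obtain S where S: "S \<subseteq> Z" "card S = k" using obtain_subset_with_card_n by metis
    then have SK: "S \<in> Ks" using Z(1) unfolding Ks_def Zs_def by auto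
    from ms_in[OF SK] obtain x y where "x \<in> S" "y \<in> S" "x \<noteq> y" "ms S = ldist x y"
      unfolding prs_def by auto
    moreover have "r < ldist x y" using Z(1) S(1) calculation unfolding Zs_def by auto
    ultimately show False using r_ge[OF SK] by simp
  qed
  have cover: "\<forall>x\<in>P. \<exists>z\<in>Z. ldist z x \<le> r"
  proof (rule ccontr)
    assume "\<not> (\<forall>x\<in>P. \<exists>z\<in>Z. ldist z x \<le> r)"
    then obtain x where x: "x \<in> P" "\<forall>z\<in>Z. r < ldist z x" by (auto simp: not_le)
    have xZ: "x \<notin> Z" using x rpos by fastforce
    have "insert x Z \<in> Zs"
      unfolding Zs_def
    proof (intro CollectI conjI ballI impI)
      show "insert x Z \<subseteq> P" using x(1) Z(1) unfolding Zs_def by auto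
    next
      fix a b assume ab: "a \<in> insert x Z" "b \<in> insert x Z" "a \<noteq> b"
      have len: "length a = length b" using ab x(1) Z(1) Pd unfolding Zs_def by auto
      show "r < ldist a b"
        using ab x Z(1) ldist_sym[OF len] unfolding Zs_def by auto
    qed
    then have "card (insert x Z) \<le> card Z" using Z(2) by blast
    then show False using xZ finZ by simp
  qed
  show ?thesis
    by (rule that[OF rpos, of Ss Z]) (use Ss Z cZ cover ms_le in \<open>auto simp: Ks_def Zs_def\<close>)
qed



lemma cover_iter:
  assumes dd: "\<forall>c r. length c = d \<and> r > 0 \<longrightarrow>
      (\<exists>Cs. finite Cs \<and> card Cs \<le> 2 ^ lam \<and> Cs \<subseteq> {x. length x = d} \<and>
             P \<inter> lcball c r \<subseteq> (\<Union>c'\<in>Cs. lcball c' (r / 2)))"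
    and r: "r > 0" and Z: "finite Z" "card Z \<le> K" "Z \<subseteq> {x. length x = d}"
    and cov: "P \<subseteq> (\<Union>z\<in>Z. lcball z r)"
  shows "\<exists>Cs. finite Cs \<and> card Cs \<le> K * 2 ^ (lam * m) \<and> Cs \<subseteq> {x. length x = d} \<and>
             P \<subseteq> (\<Union>c\<in>Cs. lcball c (r / 2 ^ m))"
proof (induction m)
  case 0 then show ?case using Z cov by (intro exI[of _ Z]) auto
next
  case (Suc m)
  then obtain Cs where Cs: "finite Cs" "card Cs \<le> K * 2 ^ (lam * m)" "Cs \<subseteq> {x. length x = d}"
     "P \<subseteq> (\<Union>c\<in>Cs. lcball c (r / 2 ^ m))" by blast
  have "\<forall>c\<in>Cs. \<exists>X. finite X \<and> card X \<le> 2 ^ lam \<and> X \<subseteq> {x. length x = d} \<and>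
             P \<inter> lcball c (r / 2 ^ m) \<subseteq> (\<Union>c'\<in>X. lcball c' (r / 2 ^ m / 2))"
  proof
    fix c assume c: "c \<in> Cs"
    have "length c = d \<and> r / 2 ^ m > 0" using c Cs(3) r by auto
    from dd[rule_format, OF this] show "\<exists>X. finite X \<and> card X \<le> 2 ^ lam \<and> X \<subseteq> {x. length x = d} \<and>
             P \<inter> lcball c (r / 2 ^ m) \<subseteq> (\<Union>c'\<in>X. lcball c' (r / 2 ^ m / 2))" .
  qed
  then obtain f where f: "\<And>c. c \<in> Cs \<Longrightarrow> finite (f c) \<and> card (f c) \<le> 2 ^ lam \<and> f c \<subseteq> {x. length x = d} \<and>
             P \<inter> lcball c (r / 2 ^ m) \<subseteq> (\<Union>c'\<in>f c. lcball c' (r / 2 ^ m / 2))"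
    by metis
  define Cs' where "Cs' = (\<Union>c\<in>Cs. f c)"
  have "card Cs' \<le> (\<Sum>c\<in>Cs. card (f c))" unfolding Cs'_def by (rule card_UN_le[OF Cs(1)])
  also have "\<dots> \<le> (\<Sum>c\<in>Cs. 2 ^ lam)" by (rule sum_mono) (use f in auto)
  also have "\<dots> = card Cs * 2 ^ lam" by simp
  also have "\<dots> \<le> K * 2 ^ (lam * m) * 2 ^ lam" using Cs(2) by simp
  also have "\<dots> = K * 2 ^ (lam * Suc m)" by (simp add: power_add algebra_simps)
  finally have c': "card Cs' \<le> K * 2 ^ (lam * Suc m)" .
  have fin': "finite Cs'" unfolding Cs'_def using Cs(1) f by auto
  have sub': "Cs' \<subseteq> {x. length x = d}" unfolding Cs'_def using f by auto
  have cov2: "P \<subseteq> (\<Union>c\<in>Cs'. lcball c (r / 2 ^ Suc m))"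
  proof
    fix x assume x: "x \<in> P"
    then obtain c where c: "c \<in> Cs" "x \<in> lcball c (r / 2 ^ m)" using Cs(4) by blast
    then obtain c' where "c' \<in> f c" "x \<in> lcball c' (r / 2 ^ m / 2)" using f[OF c(1)] x by blast
    then show "x \<in> (\<Union>c\<in>Cs'. lcball c (r / 2 ^ Suc m))" using c unfolding Cs'_def by (auto simp: mult.commute)
  qed
  show ?case using c' cov2 fin' sub' by blast
qed

lemma nets:
  assumes dd: "\<forall>c r. length c = d \<and> r > 0 \<longrightarrow>
      (\<exists>Cs. finite Cs \<and> card Cs \<le> 2 ^ lam \<and> Cs \<subseteq> {x. length x = d} \<and>
             P \<inter> lcball c r \<subseteq> (\<Union>c'\<in>Cs. lcball c' (r / 2)))"
    and r: "r > 0" and Z: "finite Z" "card Z \<le> K" "Z \<subseteq> P"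
    and Pd: "P \<subseteq> {x. length x = d}"
    and cov: "\<forall>x\<in>P. \<exists>z\<in>Z. ldist z x \<le> r"
  shows "\<exists>N. N \<subseteq> P \<and> card N \<le> K * 2 ^ (lam * m) \<and> (\<forall>x\<in>P. \<exists>y\<in>N. ldist y x \<le> 2 * r / 2 ^ m)"
proof -
  have cov': "P \<subseteq> (\<Union>z\<in>Z. lcball z r)"
  proof
    fix x assume x: "x \<in> P"
    then obtain z where z: "z \<in> Z" "ldist z x \<le> r" using cov by blast
    have "length z = d" "length x = d" using z(1) x Z(3) Pd by auto
    then have "x \<in> lcball z r" using z(2) unfolding lcball_def by simp
    then show "x \<in> (\<Union>z\<in>Z. lcball z r)" using z(1) by blast
  qed
  obtain Cs where Cs: "finite Cs" "card Cs \<le> K * 2 ^ (lam * m)" "Cs \<subseteq> {x. length x = d}"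
     "P \<subseteq> (\<Union>c\<in>Cs. lcball c (r / 2 ^ m))"
  proof -
    have Zd: "Z \<subseteq> {x. length x = d}" using Z(3) Pd by auto
    from cover_iter[OF dd r Z(1,2) Zd cov', of m] show ?thesis using that by blast
  qed
  define \<rho> where "\<rho> = r / 2 ^ m"
  define B where "B = {c \<in> Cs. P \<inter> lcball c \<rho> \<noteq> {}}"
  define ch where "ch c = (SOME p. p \<in> P \<inter> lcball c \<rho>)" for c
  have ch: "ch c \<in> P \<inter> lcball c \<rho>" if "c \<in> B" for c
  proof -
    have "\<exists>p. p \<in> P \<inter> lcball c \<rho>" using that unfolding B_def by auto
    then show ?thesis unfolding ch_def by (rule someI_ex)
  qed
  define N where "N = ch ` B"
  have "card N \<le> card B" unfolding N_def by (rule card_image_le) (use Cs(1) in \<open>simp add: B_def\<close>)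
  also have "\<dots> \<le> card Cs" unfolding B_def by (rule card_mono[OF Cs(1)]) auto
  finally have cN: "card N \<le> K * 2 ^ (lam * m)" using Cs(2) by linarith
  have NP: "N \<subseteq> P" using ch unfolding N_def by auto
  have "\<exists>y\<in>N. ldist y x \<le> 2 * r / 2 ^ m" if x: "x \<in> P" for x
  proof -
    obtain c where c: "c \<in> Cs" "x \<in> lcball c \<rho>" using Cs(4) x unfolding \<rho>_def by blast
    then have cB: "c \<in> B" using x unfolding B_def by auto
    have y: "ch c \<in> P" "ch c \<in> lcball c \<rho>" using ch[OF cB] by auto
    have lc: "length c = d" using c Cs(3) by auto
    have ly: "length (ch c) = d" using y Pd by auto
    have lx: "length x = d" using x Pd by auto
    have "ldist (ch c) x \<le> ldist (ch c) c + ldist c x"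
      by (rule ldist_triangle) (use lc ly lx in auto)
    also have "ldist (ch c) c = ldist c (ch c)" by (rule ldist_sym) (use lc ly in auto)
    also have "ldist c (ch c) + ldist c x \<le> \<rho> + \<rho>" using y(2) c(2) by (auto simp: lcball_def)
    finally show ?thesis using cB unfolding N_def \<rho>_def by (intro bexI[of _ "ch c"]) auto
  qed
  then show ?thesis using NP cN by blast
qed



lemma chain:
  fixes Nf :: "nat \<Rightarrow> real list set" and par :: "nat \<Rightarrow> real list \<Rightarrow> real list"
    and g :: "real list \<Rightarrow> real list"
  assumes Pd: "P \<subseteq> {x. length x = d}" and gl: "\<And>x. length (g x) = t"
    and NP: "\<And>m. Nf m \<subseteq> P"
    and par: "\<And>m y. y \<in> Nf (Suc m) \<Longrightarrow> par m y \<in> Nf m \<and> ldist (par m y) y \<le> 2 * r / 2 ^ m"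
    and top: "Nf (j0 + Lv) = P"
    and ev: "\<And>i y. i < Lv \<Longrightarrow> y \<in> Nf (j0 + i + 1) \<Longrightarrow>
               ldist (g y) (g (par (j0 + i) y)) \<le> (2 + real i) * ldist y (par (j0 + i) y)"
    and r: "r \<ge> 0"
  shows "\<forall>x\<in>P. \<exists>c\<in>Nf j0. ldist c x \<le> 12 * r / 2 ^ j0 \<and> ldist (g c) (g x) \<le> 12 * r / 2 ^ j0"
proof -
  define \<beta> where "\<beta> i = r * (4 * real i + 12) / 2 ^ (j0 + i)" for i
  have len: "length x = d" if "x \<in> Nf m" for x m using that NP Pd by blast
  have claim: "\<forall>x\<in>P. \<exists>c\<in>Nf (j0 + (Lv - n)). ldist c x \<le> \<beta> (Lv - n) \<and> ldist (g c) (g x) \<le> \<beta> (Lv - n)"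
    if "n \<le> Lv" for n
    using that
  proof (induction n)
    case 0
    have "\<beta> Lv \<ge> 0" using r by (simp add: \<beta>_def)
    then show ?case using top by (metis diff_zero ldist_self order_refl)
  next
    case (Suc n)
    define i where "i = Lv - Suc n"
    have i1: "Lv - n = Suc i" "i < Lv" using Suc.prems by (auto simp: i_def)
    show ?case
    proof
      fix x assume x: "x \<in> P"
      from Suc.IH[OF Suc_leD[OF Suc.prems]] x i1 obtain c' where
        c': "c' \<in> Nf (j0 + Suc i)" "ldist c' x \<le> \<beta> (Suc i)" "ldist (g c') (g x) \<le> \<beta> (Suc i)" by auto
      define c where "c = par (j0 + i) c'"
      have c'S: "c' \<in> Nf (Suc (j0 + i))" using c' by simp
      have c: "c \<in> Nf (j0 + i)" "ldist c c' \<le> 2 * r / 2 ^ (j0 + i)"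
        using par[OF c'S] unfolding c_def by auto
      have lx: "length x = d" using x Pd by auto
      have lc: "length c = d" using len[OF c(1)] .
      have lc': "length c' = d" using len[OF c'(1)] .
      have e: "ldist (g c') (g c) \<le> (2 + real i) * ldist c' c"
        using ev[OF i1(2), of c'] c' unfolding c_def by simp
      have q: "\<beta> (Suc i) + 2 * r / 2 ^ (j0 + i) \<le> \<beta> i"
        "\<beta> (Suc i) + (2 + real i) * (2 * r / 2 ^ (j0 + i)) = \<beta> i"
        using r by (auto simp: \<beta>_def field_simps)
      have "ldist c x \<le> ldist c c' + ldist c' x" by (rule ldist_triangle) (use lx lc lc' in auto)
      also have "\<dots> \<le> \<beta> i" using c(2) c'(2) q(1) by linarith
      finally have d1: "ldist c x \<le> \<beta> i" .
      have "ldist (g c) (g x) \<le> ldist (g c) (g c') + ldist (g c') (g x)" by (rule ldist_triangle) (simp_all add: gl)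
      also have "ldist (g c) (g c') = ldist (g c') (g c)" by (rule ldist_sym) (simp add: gl)
      also have "ldist c' c = ldist c c'" by (rule ldist_sym) (use lc lc' in auto)
      then have "ldist (g c') (g c) \<le> (2 + real i) * (2 * r / 2 ^ (j0 + i))"
        using e c(2) by (smt (verit) mult_left_mono of_nat_0_le_iff)
      then have "ldist (g c') (g c) + ldist (g c') (g x) \<le> \<beta> i" using c'(3) q(2) by linarith
      finally have d2: "ldist (g c) (g x) \<le> \<beta> i" .
      show "\<exists>c\<in>Nf (j0 + (Lv - Suc n)). ldist c x \<le> \<beta> (Lv - Suc n) \<and> ldist (g c) (g x) \<le> \<beta> (Lv - Suc n)"
        using c(1) d1 d2 unfolding i_def by blast
    qed
  qed
  from claim[of Lv] show ?thesis by (simp add: \<beta>_def mult.commute)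
qed



definition Pairs :: "real list set set \<Rightarrow> (real list \<times> real list) set" where
  "Pairs H = {(x, y). {x, y} \<in> H}"

definition img :: "(real list \<Rightarrow> real list) \<Rightarrow> real list set set \<Rightarrow> real list set set" where
  "img g H = (\<lambda>e. g ` e) ` H"

lemma gw_Pairs: "graph_weight H = (\<Sum>p\<in>Pairs H. ldist (fst p) (snd p)) / 2"
  unfolding graph_weight_def Pairs_def ..

lemma Pairs_mem:
  assumes "H \<subseteq> {e. e \<subseteq> S \<and> card e = 2}" "(x, y) \<in> Pairs H"
  shows "x \<in> S" "y \<in> S" "x \<noteq> y"
  using assms unfolding Pairs_def by (auto simp: subset_iff)

lemma Pairs_sub: "Pairs H \<subseteq> (\<Union>e\<in>H. e \<times> e)"
  unfolding Pairs_def by auto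

lemma Pairs_fin_card:
  assumes "H \<subseteq> {e. e \<subseteq> S \<and> card e = 2}" "finite H"
  shows "finite (Pairs H)" "card (Pairs H) \<le> 4 * card H" "card H \<le> card (Pairs H)"
proof -
  have ce: "card e = 2" if "e \<in> H" for e using assms that by auto
  have fe: "finite e" "card e = 2" if "e \<in> H" for e using ce[OF that] by (auto intro: card_ge_0_finite)
  have fU: "finite (\<Union>e\<in>H. e \<times> e)" using assms(2) fe by auto
  show fP: "finite (Pairs H)" by (rule finite_subset[OF Pairs_sub fU])
  have "card (Pairs H) \<le> card (\<Union>e\<in>H. e \<times> e)" by (rule card_mono[OF fU Pairs_sub])
  also have "\<dots> \<le> (\<Sum>e\<in>H. card (e \<times> e))" by (rule card_UN_le[OF assms(2)])
  also have "\<dots> = (\<Sum>e\<in>H. 4)" by (rule sum.cong) (auto simp: card_cartesian_product fe)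
  finally show "card (Pairs H) \<le> 4 * card H" by simp
  have "H \<subseteq> (\<lambda>p. {fst p, snd p}) ` Pairs H"
  proof
    fix e assume e: "e \<in> H"
    then obtain a b where "e = {a, b}" using fe[OF e] by (meson card_2_iff)
    then show "e \<in> (\<lambda>p. {fst p, snd p}) ` Pairs H" using e unfolding Pairs_def by (auto intro!: image_eqI[of _ _ "(a, b)"])
  qed
  then have "card H \<le> card ((\<lambda>p. {fst p, snd p}) ` Pairs H)" by (intro card_mono finite_imageI fP)
  also have "\<dots> \<le> card (Pairs H)" by (rule card_image_le[OF fP])
  finally show "card H \<le> card (Pairs H)" .
qed

lemma Pairs_img:
  assumes H: "H \<subseteq> {e. e \<subseteq> S \<and> card e = 2}"
  shows "Pairs (img g H) = (\<lambda>p. (g (fst p), g (snd p))) ` Pairs H"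
proof
  show "(\<lambda>p. (g (fst p), g (snd p))) ` Pairs H \<subseteq> Pairs (img g H)"
  proof
    fix p assume "p \<in> (\<lambda>p. (g (fst p), g (snd p))) ` Pairs H"
    then obtain a b where ab: "p = (g a, g b)" "{a, b} \<in> H" unfolding Pairs_def by auto
    have "{g a, g b} \<in> img g H" unfolding img_def using image_eqI[of "{g a, g b}" "\<lambda>e. g ` e" "{a, b}" H] ab(2) by simp
    then show "p \<in> Pairs (img g H)" using ab(1) unfolding Pairs_def by simp
  qed
next
  show "Pairs (img g H) \<subseteq> (\<lambda>p. (g (fst p), g (snd p))) ` Pairs H"
  proof
    fix p assume "p \<in> Pairs (img g H)"
    then obtain u v e where p: "p = (u, v)" "e \<in> H" "{u, v} = g ` e" unfolding Pairs_def img_def by auto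
    obtain a b where e: "e = {a, b}" using H p(2) by (auto simp: card_2_iff)
    have "{u, v} = {g a, g b}" using p(3) e by simp
    then have "(u = g a \<and> v = g b) \<or> (u = g b \<and> v = g a)" by (auto simp: doubleton_eq_iff)
    moreover have "(a, b) \<in> Pairs H" "(b, a) \<in> Pairs H" using p(2) e unfolding Pairs_def by (auto simp: insert_commute)
    ultimately show "p \<in> (\<lambda>p. (g (fst p), g (snd p))) ` Pairs H" using p(1) by force
  qed
qed

lemma gw_img:
  assumes H: "H \<subseteq> {e. e \<subseteq> S \<and> card e = 2}" and inj: "inj_on g S"
  shows "graph_weight (img g H) = (\<Sum>p\<in>Pairs H. ldist (g (fst p)) (g (snd p))) / 2"
proof -
  have "inj_on (\<lambda>p. (g (fst p), g (snd p))) (Pairs H)"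
  proof (rule inj_onI)
    fix p q assume pq: "p \<in> Pairs H" "q \<in> Pairs H" "(g (fst p), g (snd p)) = (g (fst q), g (snd q))"
    have "fst p \<in> S" "snd p \<in> S" "fst q \<in> S" "snd q \<in> S"
      using Pairs_mem[OF H, of "fst p" "snd p"] Pairs_mem[OF H, of "fst q" "snd q"] pq(1,2) by auto
    then show "p = q" using pq(3) inj by (auto simp: inj_on_def prod_eq_iff)
  qed
  then show ?thesis unfolding gw_Pairs Pairs_img[OF H] by (simp add: sum.reindex)
qed

lemma gw_bounds:
  assumes H: "H \<subseteq> {e. e \<subseteq> S \<and> card e = 2}" "finite H" and inj: "inj_on g S"
    and up: "\<And>x y. x \<in> S \<Longrightarrow> y \<in> S \<Longrightarrow> x \<noteq> y \<Longrightarrow> ldist (g x) (g y) \<le> a * ldist x y + b"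
    and lo: "\<And>x y. x \<in> S \<Longrightarrow> y \<in> S \<Longrightarrow> x \<noteq> y \<Longrightarrow> a' * ldist x y - b \<le> ldist (g x) (g y)"
    and b: "b \<ge> 0"
  shows "graph_weight (img g H) \<le> a * graph_weight H + 2 * real (card H) * b"
        "a' * graph_weight H - 2 * real (card H) * b \<le> graph_weight (img g H)"
proof -
  note PF = Pairs_fin_card[OF H]
  have mem: "fst p \<in> S" "snd p \<in> S" "fst p \<noteq> snd p" if "p \<in> Pairs H" for p
    using Pairs_mem[OF H(1), of "fst p" "snd p"] that by auto
  have "(\<Sum>p\<in>Pairs H. ldist (g (fst p)) (g (snd p))) \<le> (\<Sum>p\<in>Pairs H. a * ldist (fst p) (snd p) + b)"
    by (rule sum_mono) (use up mem in auto)
  also have "\<dots> = a * (\<Sum>p\<in>Pairs H. ldist (fst p) (snd p)) + real (card (Pairs H)) * b"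
    by (simp add: sum.distrib sum_distrib_left)
  also have "\<dots> \<le> a * (\<Sum>p\<in>Pairs H. ldist (fst p) (snd p)) + 4 * real (card H) * b"
    using PF(2) b by (intro add_left_mono mult_right_mono) (auto simp del: of_nat_mult simp: of_nat_mult[symmetric])
  finally have "(\<Sum>p\<in>Pairs H. ldist (g (fst p)) (g (snd p))) \<le> a * (\<Sum>p\<in>Pairs H. ldist (fst p) (snd p)) + 4 * real (card H) * b" .
  moreover have "a * (\<Sum>p\<in>Pairs H. ldist (fst p) (snd p)) = 2 * (a * graph_weight H)" using gw_Pairs[of H] by simp
  ultimately show "graph_weight (img g H) \<le> a * graph_weight H + 2 * real (card H) * b"
    using gw_img[OF H(1) inj] by linarith
  have "(\<Sum>p\<in>Pairs H. a' * ldist (fst p) (snd p) - b) \<le> (\<Sum>p\<in>Pairs H. ldist (g (fst p)) (g (snd p)))"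
    by (rule sum_mono) (use lo mem in auto)
  moreover have "(\<Sum>p\<in>Pairs H. a' * ldist (fst p) (snd p) - b) = a' * (\<Sum>p\<in>Pairs H. ldist (fst p) (snd p)) - real (card (Pairs H)) * b"
    by (simp add: sum_subtractf sum_distrib_left)
  moreover have "real (card (Pairs H)) * b \<le> 4 * real (card H) * b"
    using PF(2) b by (intro mult_right_mono) (auto simp del: of_nat_mult simp: of_nat_mult[symmetric])
  moreover have "a' * (\<Sum>p\<in>Pairs H. ldist (fst p) (snd p)) = 2 * (a' * graph_weight H)" using gw_Pairs[of H] by simp
  ultimately show "a' * graph_weight H - 2 * real (card H) * b \<le> graph_weight (img g H)"
    using gw_img[OF H(1) inj] by linarith
qed

lemma gw_lower:
  assumes H: "H \<subseteq> {e. e \<subseteq> S \<and> card e = 2}" "finite H"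
    and sep: "\<And>x y. x \<in> S \<Longrightarrow> y \<in> S \<Longrightarrow> x \<noteq> y \<Longrightarrow> r \<le> ldist x y" and r: "r \<ge> 0"
  shows "real (card H) * r / 2 \<le> graph_weight H"
proof -
  note PF = Pairs_fin_card[OF H]
  have mem: "fst p \<in> S" "snd p \<in> S" "fst p \<noteq> snd p" if "p \<in> Pairs H" for p
    using Pairs_mem[OF H(1), of "fst p" "snd p"] that by auto
  have "real (card H) * r \<le> real (card (Pairs H)) * r"
    using PF(3) r by (intro mult_right_mono) auto
  also have "\<dots> = (\<Sum>p\<in>Pairs H. r)" by simp
  also have "\<dots> \<le> (\<Sum>p\<in>Pairs H. ldist (fst p) (snd p))"
    by (rule sum_mono) (use sep mem in auto)
  finally show ?thesis unfolding gw_Pairs by simp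
qed



lemma max_min_le:
  fixes f h :: "'a \<Rightarrow> real"
  assumes X: "finite X" "X \<noteq> {}" and f: "\<And>x. x \<in> X \<Longrightarrow> f x \<le> c * h x + b" and c: "c \<ge> 0"
  shows "Max (f ` X) \<le> c * Max (h ` X) + b" "Min (f ` X) \<le> c * Min (h ` X) + b"
proof -
  show "Max (f ` X) \<le> c * Max (h ` X) + b"
  proof (subst Max_le_iff)
    show "\<forall>a\<in>f ` X. a \<le> c * Max (h ` X) + b"
    proof
      fix a assume "a \<in> f ` X"
      then obtain x where x: "x \<in> X" "a = f x" by auto
      have "h x \<le> Max (h ` X)" using X x by auto
      then have "c * h x \<le> c * Max (h ` X)" using c by (rule mult_left_mono)
      then show "a \<le> c * Max (h ` X) + b" using f[OF x(1)] x(2) by linarith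
    qed
  qed (use X in auto)
  have "Min (h ` X) \<in> h ` X" using X by (intro Min_in) auto
  then obtain x where x: "x \<in> X" "Min (h ` X) = h x" by auto
  have "Min (f ` X) \<le> f x" using X x by auto
  then show "Min (f ` X) \<le> c * Min (h ` X) + b" unfolding x(2) using f[OF x(1)] by linarith
qed

lemma max_min_ge:
  fixes f h :: "'a \<Rightarrow> real"
  assumes X: "finite X" "X \<noteq> {}" and f: "\<And>x. x \<in> X \<Longrightarrow> c * h x - b \<le> f x" and c: "c \<ge> 0"
  shows "c * Max (h ` X) - b \<le> Max (f ` X)" "c * Min (h ` X) - b \<le> Min (f ` X)"
proof -
  have m1: "Max (h ` X) \<in> h ` X" using X by (intro Max_in) auto
  then obtain x where x: "x \<in> X" "Max (h ` X) = h x" by auto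
  have "f x \<le> Max (f ` X)" using X x by auto
  then show "c * Max (h ` X) - b \<le> Max (f ` X)" unfolding x(2) using f[OF x(1)] by linarith
  show "c * Min (h ` X) - b \<le> Min (f ` X)"
  proof (subst Min_ge_iff)
    show "\<forall>a\<in>f ` X. c * Min (h ` X) - b \<le> a"
    proof
      fix a assume "a \<in> f ` X"
      then obtain x where x: "x \<in> X" "a = f x" by auto
      have "Min (h ` X) \<le> h x" using X x by auto
      then have "c * Min (h ` X) \<le> c * h x" using c by (rule mult_left_mono)
      then show "c * Min (h ` X) - b \<le> a" using f[OF x(1)] x(2) by linarith
    qed
  qed (use X in auto)
qed

lemma FS_props:
  assumes pP: "property_P k l F" and S: "finite S" "card S = k"
  shows "F S \<noteq> {}" "finite (F S)" "\<And>H. H \<in> F S \<Longrightarrow> H \<subseteq> {e. e \<subseteq> S \<and> card e = 2} \<and> card H = l \<and> finite H"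
proof -
  have P: "F S \<noteq> {} \<and> (\<forall>H\<in>F S. H \<subseteq> {e. e \<subseteq> S \<and> card e = 2} \<and> card H = l)"
  proof -
    have "\<forall>S. finite S \<and> card S = k \<longrightarrow> F S \<noteq> {} \<and> (\<forall>H\<in>F S. H \<subseteq> {e. e \<subseteq> S \<and> card e = 2} \<and> card H = l)"
      using pP unfolding property_P_def by (rule conjunct1[OF conjunct2])
    then show ?thesis using S by blast
  qed
  then show "F S \<noteq> {}" by blast
  have "F S \<subseteq> Pow (Pow S)" using P by blast
  then show "finite (F S)" using S(1) by (meson finite_Pow_iff finite_subset)
  fix H assume "H \<in> F S"
  moreover have "finite H" if "H \<subseteq> {e. e \<subseteq> S \<and> card e = 2}"
  proof (rule finite_subset[of H "Pow S"])
    show "H \<subseteq> Pow S" using that by auto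
  qed (use S(1) in simp)
  ultimately show "H \<subseteq> {e. e \<subseteq> S \<and> card e = 2} \<and> card H = l \<and> finite H" using P by blast
qed

lemma div_img:
  assumes pP: "property_P k l F" and S: "finite S" "card S = k" and inj: "inj_on g S"
  shows "div_val mx F (g ` S) = (if mx then Max ((\<lambda>H. graph_weight (img g H)) ` F S) else Min ((\<lambda>H. graph_weight (img g H)) ` F S))"
proof -
  have "bij_betw g S (g ` S)" using inj by (simp add: bij_betw_def)
  moreover have T: "\<forall>S S' \<sigma>. finite S \<and> card S = k \<and> bij_betw \<sigma> S S' \<longrightarrow>
        F S' = (\<lambda>H. (\<lambda>e. \<sigma> ` e) ` H) ` F S"
    using pP unfolding property_P_def by (rule conjunct2[THEN conjunct2])
  ultimately have "F (g ` S) = (\<lambda>H. (\<lambda>e. g ` e) ` H) ` F S" using S by blast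
  then have "F (g ` S) = img g ` F S" unfolding img_def .
  then show ?thesis unfolding div_val_def by (simp add: image_image)
qed

lemma div_bounds:
  assumes pP: "property_P k l F" and S: "finite S" "card S = k" and inj: "inj_on g S"
    and up: "\<And>x y. x \<in> S \<Longrightarrow> y \<in> S \<Longrightarrow> x \<noteq> y \<Longrightarrow> ldist (g x) (g y) \<le> a * ldist x y + b"
    and lo: "\<And>x y. x \<in> S \<Longrightarrow> y \<in> S \<Longrightarrow> x \<noteq> y \<Longrightarrow> a' * ldist x y - b \<le> ldist (g x) (g y)"
    and b: "b \<ge> 0" and a: "a \<ge> 0" "a' \<ge> 0"
  shows "div_val mx F (g ` S) \<le> a * div_val mx F S + 2 * real l * b"
        "a' * div_val mx F S - 2 * real l * b \<le> div_val mx F (g ` S)"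
proof -
  note FS = FS_props[OF pP S]
  have u: "graph_weight (img g H) \<le> a * graph_weight H + 2 * real l * b" if "H \<in> F S" for H
    using gw_bounds(1)[of H S g a b a'] FS(3)[OF that] inj up lo b by auto
  have v: "a' * graph_weight H - 2 * real l * b \<le> graph_weight (img g H)" if "H \<in> F S" for H
    using gw_bounds(2)[of H S g a b a'] FS(3)[OF that] inj up lo b by auto
  show "div_val mx F (g ` S) \<le> a * div_val mx F S + 2 * real l * b"
    unfolding div_img[OF pP S inj] unfolding div_val_def
    using max_min_le[OF FS(2) FS(1), of "\<lambda>H. graph_weight (img g H)" a graph_weight, OF u a(1)] by auto
  show "a' * div_val mx F S - 2 * real l * b \<le> div_val mx F (g ` S)"
    unfolding div_img[OF pP S inj] unfolding div_val_def
    using max_min_ge[OF FS(2) FS(1), of a' graph_weight _ "\<lambda>H. graph_weight (img g H)", OF v a(2)] by auto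
qed

lemma div_lower:
  assumes pP: "property_P k l F" and S: "finite S" "card S = k"
    and sep: "\<And>x y. x \<in> S \<Longrightarrow> y \<in> S \<Longrightarrow> x \<noteq> y \<Longrightarrow> r \<le> ldist x y" and r: "r \<ge> 0"
  shows "real l * r / 2 \<le> div_val mx F S"
proof -
  note FS = FS_props[OF pP S]
  have u: "real l * r / 2 \<le> graph_weight H" if "H \<in> F S" for H
    using gw_lower[of H S r] FS(3)[OF that] sep r by auto
  obtain H where H: "H \<in> F S" using FS(1) by blast
  show ?thesis
  proof (cases mx)
    case True
    have "graph_weight H \<le> Max (graph_weight ` F S)" using FS(2) H by auto
    then show ?thesis using True u[OF H] unfolding div_val_def by simp
  next
    case False
    have "real l * r / 2 \<le> Min (graph_weight ` F S)" using FS(1,2) u by (subst Min_ge_iff) auto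
    then show ?thesis using False unfolding div_val_def by simp
  qed
qed



lemma distortion:
  fixes g :: "real list \<Rightarrow> real list"
  assumes NP: "N \<subseteq> P" and Pd: "P \<subseteq> {x. length x = d}" and gl: "\<And>x. length (g x) = t"
    and B: "B \<ge> 0" and dl: "0 \<le> \<delta>" "\<delta> \<le> 1"
    and near: "\<forall>x\<in>P. \<exists>c\<in>N. ldist c x \<le> B \<and> ldist (g c) (g x) \<le> B"
    and top: "\<And>c c'. c \<in> N \<Longrightarrow> c' \<in> N \<Longrightarrow> c \<noteq> c' \<Longrightarrow>
                ldist (g c) (g c') \<le> (1 + \<delta>) * ldist c c' \<and> (1 - \<delta>) * ldist c c' \<le> ldist (g c) (g c')"
    and x: "x \<in> P" and y: "y \<in> P"
  shows "ldist (g x) (g y) \<le> (1 + \<delta>) * ldist x y + 6 * B"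
        "(1 - \<delta>) * ldist x y - 6 * B \<le> ldist (g x) (g y)"
proof -
  obtain c where c: "c \<in> N" "ldist c x \<le> B" "ldist (g c) (g x) \<le> B" using near x by blast
  obtain c' where c': "c' \<in> N" "ldist c' y \<le> B" "ldist (g c') (g y) \<le> B" using near y by blast
  have top': "ldist (g c) (g c') \<le> (1 + \<delta>) * ldist c c' \<and> (1 - \<delta>) * ldist c c' \<le> ldist (g c) (g c')"
    using top[OF c(1) c'(1)] dl by (cases "c = c'") auto
  have lx: "length x = d" and ly: "length y = d" and lc: "length c = d" and lc': "length c' = d"
    using x y c(1) c'(1) NP Pd by auto
  note tri = ldist_triangle ldist_sym
  have s1: "ldist c x = ldist x c" "ldist c' y = ldist y c'" using lx ly lc lc' by (auto intro: ldist_sym)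
  have s2: "ldist (g c) (g x) = ldist (g x) (g c)" "ldist (g c') (g y) = ldist (g y) (g c')" using gl by (auto intro: ldist_sym)
  have t1: "ldist c c' \<le> ldist c x + ldist x y + ldist y c'"
    using ldist_triangle[of c x c'] ldist_triangle[of x y c'] lx ly lc lc' by auto
  have t2: "ldist x y \<le> ldist x c + ldist c c' + ldist c' y"
    using ldist_triangle[of x c y] ldist_triangle[of c c' y] lx ly lc lc' by auto
  have t3: "ldist (g x) (g y) \<le> ldist (g x) (g c) + ldist (g c) (g c') + ldist (g c') (g y)"
    using ldist_triangle[of "g x" "g c" "g y"] ldist_triangle[of "g c" "g c'" "g y"] gl by auto
  have t4: "ldist (g c) (g c') \<le> ldist (g c) (g x) + ldist (g x) (g y) + ldist (g y) (g c')"
    using ldist_triangle[of "g c" "g x" "g c'"] ldist_triangle[of "g x" "g y" "g c'"] gl by auto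
  have "ldist c c' \<le> ldist x y + 2 * B" using t1 s1 c c' by linarith
  then have "(1 + \<delta>) * ldist c c' \<le> (1 + \<delta>) * (ldist x y + 2 * B)" using dl by (intro mult_left_mono) auto
  moreover have "ldist (g x) (g y) \<le> B + (1 + \<delta>) * ldist c c' + B" using t3 top' s2 c c' by linarith
  moreover have "(1 + \<delta>) * (ldist x y + 2 * B) = (1 + \<delta>) * ldist x y + 2 * B + 2 * B * \<delta>" by (simp add: algebra_simps)
  moreover have "2 * B * \<delta> \<le> 2 * B" using dl B by (simp add: mult_left_le)
  ultimately show "ldist (g x) (g y) \<le> (1 + \<delta>) * ldist x y + 6 * B" using B by linarith
  have "ldist x y - 2 * B \<le> ldist c c'" using t2 s1 c c' by linarith
  then have "(1 - \<delta>) * (ldist x y - 2 * B) \<le> (1 - \<delta>) * ldist c c'" using dl by (intro mult_left_mono) auto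
  moreover have "(1 - \<delta>) * ldist c c' - 2 * B \<le> ldist (g x) (g y)" using t4 top' s2 c c' by linarith
  moreover have "(1 - \<delta>) * (ldist x y - 2 * B) = (1 - \<delta>) * ldist x y - 2 * B + 2 * B * \<delta>" by (simp add: algebra_simps)
  moreover have "0 \<le> 2 * B * \<delta>" using dl B by simp
  ultimately show "(1 - \<delta>) * ldist x y - 6 * B \<le> ldist (g x) (g y)" using B by linarith
qed



lemma arith_final:
  fixes Opt w V Og X \<epsilon> \<delta> :: real
  assumes d: "\<delta> = \<epsilon> / 128" and e: "0 < \<epsilon>" "\<epsilon> < 1" and Opt: "Opt \<ge> 0"
    and X: "X \<le> 4 * \<delta> * Opt" "X \<ge> 0"
    and V: "V \<le> (1 + \<delta>) * w + X" and Og: "(1 - \<delta>) * Opt - X \<le> Og" and H: "Og / (1 + \<epsilon>) \<le> V"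
  shows "Opt / (1 + 2 * \<epsilon>) \<le> w"
proof -
  have e1: "Og \<le> (1 + \<epsilon>) * V" using H e by (simp add: divide_le_eq mult.commute)
  have "(1 + \<epsilon>) * V \<le> (1 + \<epsilon>) * ((1 + \<delta>) * w + X)" using V e by (intro mult_left_mono) auto
  then have "(1 - \<delta>) * Opt - X \<le> (1 + \<epsilon>) * (1 + \<delta>) * w + (1 + \<epsilon>) * X"
    using e1 Og by (simp add: algebra_simps)
  moreover have "(2 + \<epsilon>) * X \<le> 3 * (4 * \<delta> * Opt)"
  proof -
    have "(2 + \<epsilon>) * X \<le> 3 * X" using X(2) e by (intro mult_right_mono) auto
    then show ?thesis using X(1) by linarith
  qed
  ultimately have k1: "(1 - 13 * \<delta>) * Opt \<le> (1 + \<epsilon>) * (1 + \<delta>) * w"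
    by (simp add: algebra_simps)
  have k2: "(1 + \<epsilon>) * (1 + \<delta>) \<le> (1 - 13 * \<delta>) * (1 + 2 * \<epsilon>)"
  proof -
    have x1: "(1 + \<epsilon>) * (1 + \<delta>) = 1 + \<epsilon> + \<delta> + \<epsilon> * \<delta>" by (simp add: algebra_simps)
    have x2: "(1 - 13 * \<delta>) * (1 + 2 * \<epsilon>) = 1 + 2 * \<epsilon> - 13 * \<delta> - 26 * (\<epsilon> * \<delta>)" by (simp add: algebra_simps)
    have x3: "\<epsilon> * \<delta> = \<epsilon> * \<epsilon> / 128" by (simp add: d)
    have ee: "\<epsilon> * \<epsilon> \<le> \<epsilon>" using e by (intro mult_left_le) auto
    show ?thesis unfolding x1 x2 x3 using ee e d by linarith
  qed
  have pos: "(1 + \<epsilon>) * (1 + \<delta>) > 0" using d e by simp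
  have "(1 + \<epsilon>) * (1 + \<delta>) * Opt \<le> (1 - 13 * \<delta>) * (1 + 2 * \<epsilon>) * Opt"
    using k2 Opt by (rule mult_right_mono)
  also have "\<dots> = (1 + 2 * \<epsilon>) * ((1 - 13 * \<delta>) * Opt)" by simp
  also have "\<dots> \<le> (1 + 2 * \<epsilon>) * ((1 + \<epsilon>) * (1 + \<delta>) * w)"
    using k1 e by (intro mult_left_mono) auto
  finally have "(1 + \<epsilon>) * (1 + \<delta>) * Opt \<le> (1 + \<epsilon>) * (1 + \<delta>) * ((1 + 2 * \<epsilon>) * w)"
    by (simp add: algebra_simps)
  then have "Opt \<le> (1 + 2 * \<epsilon>) * w" using mult_le_cancel_left_pos[OF pos] by blast
  then show ?thesis using e by (simp add: divide_le_eq mult.commute)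
qed

lemma opt_set_eq: "{div_val mx F S | S. S \<subseteq> Q \<and> card S = k} = div_val mx F ` {S. S \<subseteq> Q \<and> card S = k}"
  by auto

lemma opt_fin: "finite Q \<Longrightarrow> finite {div_val mx F S | S. S \<subseteq> Q \<and> card S = k}"
  unfolding opt_set_eq by (rule finite_imageI) (rule finite_subset[of _ "Pow Q"], auto)

lemma final_det:
  assumes pP: "property_P k l F" and fin: "finite P" and kP: "k \<le> card P"
    and inj: "inj_on g P"
    and up: "\<And>x y. x \<in> P \<Longrightarrow> y \<in> P \<Longrightarrow> x \<noteq> y \<Longrightarrow> ldist (g x) (g y) \<le> (1 + \<delta>) * ldist x y + \<delta> * r"
    and lo: "\<And>x y. x \<in> P \<Longrightarrow> y \<in> P \<Longrightarrow> x \<noteq> y \<Longrightarrow> (1 - \<delta>) * ldist x y - \<delta> * r \<le> ldist (g x) (g y)"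
    and Ss: "Ss \<subseteq> P" "card Ss = k" "\<And>x y. x \<in> Ss \<Longrightarrow> y \<in> Ss \<Longrightarrow> x \<noteq> y \<Longrightarrow> r \<le> ldist x y"
    and r: "r > 0"
    and d: "\<delta> = \<epsilon> / 128" and e: "0 < \<epsilon>" "\<epsilon> < 1"
    and S: "S \<subseteq> P" "card S = k" "div_opt k mx F (g ` P) / (1 + \<epsilon>) \<le> div_val mx F (g ` S)"
  shows "div_opt k mx F P / (1 + 2 * \<epsilon>) \<le> div_val mx F S"
proof -
  define Ks where "Ks = {S. S \<subseteq> P \<and> card S = k}"
  have finKs: "finite Ks" unfolding Ks_def by (rule finite_subset[of _ "Pow P"]) (use fin in auto)
  have SsK: "Ss \<in> Ks" using Ss unfolding Ks_def by auto
  have dO: "div_opt k mx F P = Max (div_val mx F ` Ks)" unfolding div_opt_def opt_set_eq Ks_def ..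
  have "Max (div_val mx F ` Ks) \<in> div_val mx F ` Ks" using finKs SsK by (intro Max_in) auto
  then obtain So where So: "So \<in> Ks" "div_val mx F So = div_opt k mx F P" unfolding dO by auto
  have d0: "0 \<le> \<delta>" "\<delta> \<le> 1" using d e by auto
  have b0: "\<delta> * r \<ge> 0" using d0 r by simp
  have bnd: "div_val mx F (g ` T) \<le> (1 + \<delta>) * div_val mx F T + 2 * real l * (\<delta> * r)"
            "(1 - \<delta>) * div_val mx F T - 2 * real l * (\<delta> * r) \<le> div_val mx F (g ` T)"
    if T: "T \<in> Ks" for T
  proof -
    have T': "finite T" "card T = k" "T \<subseteq> P" using T fin unfolding Ks_def by (auto intro: finite_subset)
    have injT: "inj_on g T" using inj T'(3) by (rule inj_on_subset)
    have upT: "\<And>x y. x \<in> T \<Longrightarrow> y \<in> T \<Longrightarrow> x \<noteq> y \<Longrightarrow> ldist (g x) (g y) \<le> (1 + \<delta>) * ldist x y + \<delta> * r"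
      using up T'(3) by blast
    have loT: "\<And>x y. x \<in> T \<Longrightarrow> y \<in> T \<Longrightarrow> x \<noteq> y \<Longrightarrow> (1 - \<delta>) * ldist x y - \<delta> * r \<le> ldist (g x) (g y)"
      using lo T'(3) by blast
    show "div_val mx F (g ` T) \<le> (1 + \<delta>) * div_val mx F T + 2 * real l * (\<delta> * r)"
      by (rule div_bounds(1)[OF pP T'(1,2) injT upT loT b0]) (use d0 in auto)
    show "(1 - \<delta>) * div_val mx F T - 2 * real l * (\<delta> * r) \<le> div_val mx F (g ` T)"
      by (rule div_bounds(2)[OF pP T'(1,2) injT upT loT b0]) (use d0 in auto)
  qed
  have lowSs: "real l * r / 2 \<le> div_val mx F Ss"
    by (rule div_lower[OF pP _ Ss(2) Ss(3)]) (use Ss(1) fin r in \<open>auto intro: finite_subset\<close>)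
  have "div_val mx F Ss \<le> div_opt k mx F P" unfolding dO using finKs SsK by auto
  then have lO: "real l * r \<le> 2 * div_opt k mx F P" using lowSs by linarith
  have O0: "div_opt k mx F P \<ge> 0" using lO r by (smt (verit) mult_nonneg_nonneg of_nat_0_le_iff)
  have "div_val mx F (g ` So) \<le> div_opt k mx F (g ` P)"
  proof -
    have "g ` So \<subseteq> g ` P" "card (g ` So) = k"
      using So(1) inj unfolding Ks_def by (auto simp: card_image inj_on_subset)
    then have "div_val mx F (g ` So) \<in> {div_val mx F S | S. S \<subseteq> g ` P \<and> card S = k}" by blast
    then show ?thesis unfolding div_opt_def using opt_fin[of "g ` P" mx F k] fin by auto
  qed
  then have Og: "(1 - \<delta>) * div_opt k mx F P - 2 * real l * (\<delta> * r) \<le> div_opt k mx F (g ` P)"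
  proof -
    have "(1 - \<delta>) * div_val mx F So = (1 - \<delta>) * div_opt k mx F P" using So(2) by simp
    then show ?thesis using bnd(2)[OF So(1)] \<open>div_val mx F (g ` So) \<le> div_opt k mx F (g ` P)\<close> by linarith
  qed
  have SK: "S \<in> Ks" using S unfolding Ks_def by auto
  have X: "2 * real l * (\<delta> * r) \<le> 4 * \<delta> * div_opt k mx F P"
  proof -
    have "2 * real l * (\<delta> * r) = \<delta> * (2 * (real l * r))" by simp
    also have "\<dots> \<le> \<delta> * (2 * (2 * div_opt k mx F P))" using lO d0 by (intro mult_left_mono) auto
    finally show ?thesis by simp
  qed
  show ?thesis
    by (rule arith_final[OF d e O0 X _ bnd(1)[OF SK] Og S(3)]) (use b0 in simp)
qed



lemma geom_half: "(\<Sum>i<n. (1/2::real) ^ i) \<le> 2"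
proof -
  have "(\<Sum>i<n. (1/2::real) ^ i) = 2 - 2 * (1/2) ^ n"
    by (induction n) (auto simp: algebra_simps)
  then show ?thesis by simp
qed

lemma numeric_W:
  fixes \<epsilon> :: real and t k lam j0 :: nat
  assumes e: "0 < \<epsilon>" "\<epsilon> < 1" and k: "k \<ge> 2"
    and tb: "real t \<ge> 2^20 / \<epsilon>\<^sup>2 * (real lam * ln (2 / \<epsilon>) + ln (real k))"
    and j0: "real j0 \<le> log 2 (9216 / \<epsilon>) + 1"
  shows "12 * real k ^ 2 * 4 ^ (lam * (j0 + 1)) \<le> exp (real t * (\<epsilon> / 128)\<^sup>2 / 2)"
proof -
  have lk: "ln (real k) \<ge> ln 2" using k by simp
  have l2: "ln (2 / \<epsilon>) \<ge> ln 2" using e by (simp add: le_divide_eq)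
  have ln2: "ln (2::real) > 0" by simp
  have L2: "(real j0 + 1) * ln 2 \<le> ln (36864 / \<epsilon>)"
  proof -
    have "(real j0 + 1) * ln 2 \<le> (log 2 (9216 / \<epsilon>) + 2) * ln 2"
      using j0 ln2 by (intro mult_right_mono) auto
    also have "\<dots> = ln (9216 / \<epsilon>) + ln 4"
    proof -
      have "log 2 (9216 / \<epsilon>) * ln 2 = ln (9216 / \<epsilon>)" by (simp add: log_def)
      moreover have "ln (4::real) = 2 * ln 2" using ln_realpow[of 2 2] by simp
      ultimately show ?thesis by (simp add: algebra_simps)
    qed
    also have "\<dots> = ln (9216 / \<epsilon> * 4)" using e by (subst ln_mult) auto
    also have "9216 / \<epsilon> * 4 = 36864 / \<epsilon>" by simp
    finally show ?thesis .
  qed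
  have L3: "ln (36864 / \<epsilon>) \<le> 16 * ln (2 / \<epsilon>)"
  proof -
    have "ln (36864 / \<epsilon>) = ln (18432 * (2 / \<epsilon>))" by simp
    also have "\<dots> = ln 18432 + ln (2 / \<epsilon>)" using e by (subst ln_mult) auto
    finally have "ln (36864 / \<epsilon>) = ln 18432 + ln (2 / \<epsilon>)" .
    moreover have "ln (18432::real) \<le> 15 * ln 2"
    proof -
      have "ln (18432::real) \<le> ln (2 ^ 15)" by simp
      also have "\<dots> = 15 * ln 2" using ln_realpow[of "2::real" 15] by simp
      finally show ?thesis .
    qed
    ultimately show ?thesis using l2 by linarith
  qed
  have L12: "ln (12::real) \<le> 4 * ln (real k)"
  proof -
    have "(12::real) \<le> real k ^ 4"
    proof -
      have "(2::real) ^ 4 \<le> real k ^ 4" using k by (intro power_mono) auto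
      then show ?thesis by simp
    qed
    then have "ln (12::real) \<le> ln (real k ^ 4)" using k by (subst ln_le_cancel_iff) auto
    also have "\<dots> = 4 * ln (real k)" using k by (simp add: ln_realpow)
    finally show ?thesis .
  qed
  have lnW: "ln (12 * real k ^ 2 * 4 ^ (lam * (j0 + 1))) = ln 12 + 2 * ln (real k) + real lam * (real j0 + 1) * (2 * ln 2)"
  proof -
    have "ln (4 ^ (lam * (j0 + 1)) :: real) = real (lam * (j0 + 1)) * ln 4" by (simp add: ln_realpow)
    moreover have "ln (4::real) = 2 * ln 2" using ln_realpow[of 2 2] by simp
    ultimately show ?thesis using k by (simp add: ln_mult ln_realpow algebra_simps)
  qed
  have "real lam * (real j0 + 1) * (2 * ln 2) \<le> 32 * (real lam * ln (2 / \<epsilon>))"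
  proof -
    have "(real j0 + 1) * (2 * ln 2) \<le> 32 * ln (2 / \<epsilon>)" using L2 L3 by linarith
    then have "real lam * ((real j0 + 1) * (2 * ln 2)) \<le> real lam * (32 * ln (2 / \<epsilon>))" by (rule mult_left_mono) simp
    then show ?thesis by (simp add: algebra_simps)
  qed
  then have "ln (12 * real k ^ 2 * 4 ^ (lam * (j0 + 1))) \<le> 32 * (real lam * ln (2 / \<epsilon>) + ln (real k))"
  proof -
    have "32 * (real lam * ln (2 / \<epsilon>) + ln (real k)) = 32 * (real lam * ln (2 / \<epsilon>)) + 32 * ln (real k)"
      by (simp add: algebra_simps)
    then show ?thesis unfolding lnW using L12 lk ln2 \<open>real lam * (real j0 + 1) * (2 * ln 2) \<le> 32 * (real lam * ln (2 / \<epsilon>))\<close> by linarith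
  qed
  also have "\<dots> \<le> real t * (\<epsilon> / 128)\<^sup>2 / 2"
  proof -
    have "real t * (\<epsilon> / 128)\<^sup>2 / 2 = real t * \<epsilon>\<^sup>2 / 32768" by (simp add: power_divide)
    moreover have "2^20 / \<epsilon>\<^sup>2 * (real lam * ln (2 / \<epsilon>) + ln (real k)) * \<epsilon>\<^sup>2 \<le> real t * \<epsilon>\<^sup>2"
      using tb e by (intro mult_right_mono) auto
    moreover have "2^20 / \<epsilon>\<^sup>2 * (real lam * ln (2 / \<epsilon>) + ln (real k)) * \<epsilon>\<^sup>2 = 1048576 * (real lam * ln (2 / \<epsilon>) + ln (real k))"
      using e by simp
    ultimately have "1048576 * (real lam * ln (2 / \<epsilon>) + ln (real k)) \<le> real t * \<epsilon>\<^sup>2" by linarith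
    then have "32 * (real lam * ln (2 / \<epsilon>) + ln (real k)) \<le> real t * \<epsilon>\<^sup>2 / 32768" by linarith
    with \<open>real t * (\<epsilon> / 128)\<^sup>2 / 2 = real t * \<epsilon>\<^sup>2 / 32768\<close> show ?thesis by linarith
  qed
  finally have "ln (12 * real k ^ 2 * 4 ^ (lam * (j0 + 1))) \<le> real t * (\<epsilon> / 128)\<^sup>2 / 2" .
  then show ?thesis using k by (subst ln_le_cancel_iff[symmetric]) auto
qed

lemma numeric_sum:
  fixes q W :: real and k lam j0 Lv :: nat
  assumes k: "k \<ge> 1" and W: "12 * real k ^ 2 * 4 ^ (lam * (j0 + 1)) \<le> exp (real t * \<delta>\<^sup>2 / 2)"
    and d: "0 < \<delta>" "\<delta> \<le> 1"
  shows "2 * (real k * 2 ^ (lam * j0)) ^ 2 * exp (- (real t / 2) * \<delta>\<^sup>2)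
        + (\<Sum>i<Lv. real k * 2 ^ (lam * (j0 + i + 1)) * exp (- (real t / 2) * (1 + real i)\<^sup>2)) \<le> 1 / 3"
proof -
  define W where "W = 12 * real k ^ 2 * 4 ^ (lam * (j0 + 1))"
  have Wp: "W > 0" using k by (simp add: W_def)
  have E1: "exp (- (real t / 2) * \<delta>\<^sup>2) \<le> 1 / W"
  proof -
    have "exp (- (real t / 2) * \<delta>\<^sup>2) = 1 / exp (real t * \<delta>\<^sup>2 / 2)" by (simp add: exp_minus field_simps)
    then show ?thesis using W Wp unfolding W_def[symmetric] by (simp add: frac_le)
  qed
  have E2: "exp (- (real t / 2)) \<le> 1 / W"
  proof -
    have "real t * \<delta>\<^sup>2 / 2 \<le> real t / 2"
      using d by (simp add: power_le_one mult_left_le)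
    then have "exp (real t * \<delta>\<^sup>2 / 2) \<le> exp (real t / 2)" by simp
    then have "W \<le> exp (real t / 2)" using W unfolding W_def by linarith
    moreover have "exp (- (real t / 2)) = 1 / exp (real t / 2)" by (simp add: exp_minus field_simps)
    ultimately show ?thesis using Wp by (simp add: frac_le)
  qed
  have f4: "((2::real) ^ n) ^ 2 = 4 ^ n" for n by (induction n) (auto simp: power2_eq_square algebra_simps)
  have A: "2 * (real k * 2 ^ (lam * j0)) ^ 2 * exp (- (real t / 2) * \<delta>\<^sup>2) \<le> 1 / 6"
  proof -
    have "(real k * 2 ^ (lam * j0)) ^ 2 = real k ^ 2 * 4 ^ (lam * j0)" by (simp add: power_mult_distrib f4)
    also have "(4::real) ^ (lam * j0) \<le> 4 ^ (lam * (j0 + 1))" by (rule power_increasing) auto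
    then have "real k ^ 2 * 4 ^ (lam * j0) \<le> real k ^ 2 * 4 ^ (lam * (j0 + 1))" by (rule mult_left_mono) simp
    finally have "(real k * 2 ^ (lam * j0)) ^ 2 \<le> real k ^ 2 * 4 ^ (lam * (j0 + 1))" .
    then have "2 * (real k * 2 ^ (lam * j0)) ^ 2 \<le> W / 6" unfolding W_def by simp
    then have "2 * (real k * 2 ^ (lam * j0)) ^ 2 * exp (- (real t / 2) * \<delta>\<^sup>2) \<le> W / 6 * (1 / W)"
      using E1 Wp by (intro mult_mono) auto
    then show ?thesis using Wp by simp
  qed
  have B: "real k * 2 ^ (lam * (j0 + i + 1)) * exp (- (real t / 2) * (1 + real i)\<^sup>2) \<le> (1 / 12) * (1/2) ^ i" for i
  proof -
    have "exp (- (real t / 2) * (1 + real i)\<^sup>2) \<le> exp (- (real t / 2) * (1 + real i))"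
    proof -
      have "(1 + real i) \<le> (1 + real i)\<^sup>2" by (simp add: power2_eq_square)
      then show ?thesis by (simp add: mult_left_mono)
    qed
    also have "\<dots> = exp (- (real t / 2)) * exp (- (real t / 2)) ^ i"
      by (simp add: exp_of_nat_mult[symmetric] mult_exp_exp algebra_simps)
    finally have e: "exp (- (real t / 2) * (1 + real i)\<^sup>2) \<le> exp (- (real t / 2)) * exp (- (real t / 2)) ^ i" .
    have eq: "real k * 2 ^ (lam * (j0 + i + 1)) = (real k * 2 ^ (lam * (j0 + 1))) * (2 ^ lam) ^ i"
      by (simp add: power_add power_mult[symmetric] algebra_simps)
    have "real k * 2 ^ (lam * (j0 + i + 1)) * exp (- (real t / 2) * (1 + real i)\<^sup>2)
        = ((real k * 2 ^ (lam * (j0 + 1))) * (2 ^ lam) ^ i) * exp (- (real t / 2) * (1 + real i)\<^sup>2)"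
      by (simp only: eq)
    also have "\<dots> \<le> ((real k * 2 ^ (lam * (j0 + 1))) * (2 ^ lam) ^ i) * (exp (- (real t / 2)) * exp (- (real t / 2)) ^ i)"
      by (rule mult_left_mono[OF e]) simp
    also have "\<dots> = (real k * 2 ^ (lam * (j0 + 1)) * exp (- (real t / 2))) * (2 ^ lam * exp (- (real t / 2))) ^ i"
      by (simp add: power_mult_distrib algebra_simps)
    also have "\<dots> \<le> (1 / 12) * (1 / 2) ^ i"
    proof (intro mult_mono power_mono)
      have "real k * 2 ^ (lam * (j0 + 1)) \<le> W / 12"
      proof -
        have "real k \<le> real k ^ 2" using k by (simp add: power2_eq_square)
        moreover have "(2::real) ^ (lam * (j0 + 1)) \<le> 4 ^ (lam * (j0 + 1))" by (simp add: power_mono)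
        ultimately show ?thesis unfolding W_def by (simp add: mult_mono)
      qed
      then have "real k * 2 ^ (lam * (j0 + 1)) * exp (- (real t / 2)) \<le> W / 12 * (1 / W)"
        by (rule mult_mono[OF _ E2]) (use Wp in auto)
      then show "real k * 2 ^ (lam * (j0 + 1)) * exp (- (real t / 2)) \<le> 1 / 12" using Wp by simp
      have "(2::real) ^ lam \<le> W / 12"
      proof -
        have "(2::real) ^ lam \<le> 4 ^ lam" by (rule power_mono) auto
        also have "(4::real) ^ lam \<le> 4 ^ (lam * (j0 + 1))" by (rule power_increasing) auto
        finally have a: "(2::real) ^ lam \<le> 4 ^ (lam * (j0 + 1))" .
        have "1 \<le> real k ^ 2" using k by simp
        then have b: "1 * (4::real) ^ (lam * (j0 + 1)) \<le> real k ^ 2 * 4 ^ (lam * (j0 + 1))"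
          by (rule mult_right_mono) simp
        have "(2::real) ^ lam \<le> real k ^ 2 * 4 ^ (lam * (j0 + 1))" using a b by linarith
        then show ?thesis unfolding W_def by simp
      qed
      then have "2 ^ lam * exp (- (real t / 2)) \<le> W / 12 * (1 / W)"
        by (rule mult_mono[OF _ E2]) (use Wp in auto)
      then show "2 ^ lam * exp (- (real t / 2)) \<le> 1 / 2" using Wp by simp
    qed auto
    finally show ?thesis .
  qed
  have "(\<Sum>i<Lv. real k * 2 ^ (lam * (j0 + i + 1)) * exp (- (real t / 2) * (1 + real i)\<^sup>2))
      \<le> (\<Sum>i<Lv. (1 / 12) * (1/2) ^ i)" by (rule sum_mono) (rule B)
  also have "\<dots> = (1/12) * (\<Sum>i<Lv. (1/2::real) ^ i)" by (simp add: sum_distrib_left)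
  also have "\<dots> \<le> (1/12) * 2" using geom_half[of Lv] by simp
  finally show ?thesis using A by simp
qed



lemma main_prob:
  fixes \<epsilon> :: real and d lam k t :: nat and P :: "real list set"
  assumes e: "0 < \<epsilon>" "\<epsilon> < 1" and k: "k \<ge> 2" and t0: "t > 0"
    and tb: "real t \<ge> 2^20 / \<epsilon>\<^sup>2 * (real lam * ln (2 / \<epsilon>) + ln (real k))"
    and fin: "finite P" and Pd: "P \<subseteq> {x. length x = d}" and kP: "k \<le> card P" and dd: "ddim d P = lam"
  shows "\<exists>A \<in> sets (gauss_jl t d). measure (gauss_jl t d) A \<ge> 2 / 3 \<and>
           (\<forall>G\<in>A. \<forall>l F mx. property_P k l F \<longrightarrow>
               (\<forall>S. S \<subseteq> P \<and> card S = k \<and>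
                    div_val mx F (jl_apply t d G ` S) \<ge> div_opt k mx F (jl_apply t d G ` P) / (1 + \<epsilon>)
                    \<longrightarrow> div_val mx F S \<ge> div_opt k mx F P / (1 + 2 * \<epsilon>)))"
proof -
  interpret prob_space "gauss_jl t d" using gauss_prob[OF t0] .
  define gd where "gd G x y = ldist (jl_apply t d G x) (jl_apply t d G y)" for G x y
  have gd_meas': "{G \<in> space (gauss_jl t d). a \<le> gd G x y} \<in> sets (gauss_jl t d)"
     "{G \<in> space (gauss_jl t d). gd G x y \<le> a} \<in> sets (gauss_jl t d)" for a x y
    unfolding gd_def by measurable
  obtain r Ss Z where r: "r > 0" and Ss: "Ss \<subseteq> P" "card Ss = k" "\<forall>x\<in>Ss. \<forall>y\<in>Ss. x \<noteq> y \<longrightarrow> r \<le> ldist x y"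
    and Z: "Z \<subseteq> P" "card Z \<le> k - 1" "\<forall>x\<in>P. \<exists>z\<in>Z. ldist z x \<le> r"
    using packing[OF fin Pd k kP] by blast
  have finZ: "finite Z" using Z(1) fin by (rule finite_subset)
  have ddp: "\<forall>c r. length c = d \<and> r > 0 \<longrightarrow>
      (\<exists>Cs. finite Cs \<and> card Cs \<le> 2 ^ lam \<and> Cs \<subseteq> {x. length x = d} \<and>
             P \<inter> lcball c r \<subseteq> (\<Union>c'\<in>Cs. lcball c' (r / 2)))"
    using ddim_prop[OF fin Pd] unfolding dd .
  have "\<forall>m. \<exists>N. N \<subseteq> P \<and> card N \<le> (k - 1) * 2 ^ (lam * m) \<and> (\<forall>x\<in>P. \<exists>y\<in>N. ldist y x \<le> 2 * r / 2 ^ m)"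
    using nets[OF ddp r finZ Z(2) Z(1) Pd Z(3)] by blast
  from choice[OF this] obtain Nf where Nf_all: "\<forall>m. Nf m \<subseteq> P \<and> card (Nf m) \<le> (k - 1) * 2 ^ (lam * m) \<and>
      (\<forall>x\<in>P. \<exists>y\<in>Nf m. ldist y x \<le> 2 * r / 2 ^ m)" by blast
  have NfP: "\<And>m. Nf m \<subseteq> P" and Nfc: "\<And>m. card (Nf m) \<le> (k - 1) * 2 ^ (lam * m)"
    and Nfn: "\<And>m x. x \<in> P \<Longrightarrow> \<exists>y\<in>Nf m. ldist y x \<le> 2 * r / 2 ^ m" using Nf_all by blast+
  have Nffin: "finite (Nf m)" for m using NfP fin by (rule finite_subset)
  have Nfc': "real (card (Nf m)) \<le> real k * 2 ^ (lam * m)" for m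
  proof -
    have "card (Nf m) \<le> k * 2 ^ (lam * m)" using Nfc[of m] by (meson diff_le_self le_trans mult_le_mono1)
    then have "real (card (Nf m)) \<le> real (k * 2 ^ (lam * m))" by linarith
    then show ?thesis by simp
  qed
  define par where "par m y = (SOME p. p \<in> Nf m \<and> ldist p y \<le> 2 * r / 2 ^ m)" for m y
  have par: "par m y \<in> Nf m \<and> ldist (par m y) y \<le> 2 * r / 2 ^ m" if "y \<in> Nf (Suc m)" for m y
  proof -
    have "y \<in> P" using that NfP by blast
    then have "\<exists>p. p \<in> Nf m \<and> ldist p y \<le> 2 * r / 2 ^ m" using Nfn by blast
    then show ?thesis unfolding par_def by (rule someI_ex)
  qed
  define \<delta> where "\<delta> = \<epsilon> / 128"
  have d0: "0 < \<delta>" "\<delta> \<le> 1" "\<delta> < 1" using e by (auto simp: \<delta>_def)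
  define j0 where "j0 = nat \<lceil>log 2 (9216 / \<epsilon>)\<rceil>"
  have logpos: "log 2 (9216 / \<epsilon>) > 0" using e by (simp add: le_divide_eq)
  have j0r: "real j0 = real_of_int \<lceil>log 2 (9216 / \<epsilon>)\<rceil>" unfolding j0_def using logpos by simp
  have j0b: "real j0 \<le> log 2 (9216 / \<epsilon>) + 1" unfolding j0r by linarith
  have j0a: "9216 / \<epsilon> \<le> 2 ^ j0"
  proof -
    have "9216 / \<epsilon> = 2 powr (log 2 (9216 / \<epsilon>))" using e by simp
    also have "\<dots> \<le> 2 powr (real j0)" unfolding j0r by (rule powr_mono) auto
    also have "\<dots> = 2 ^ j0" by (simp add: powr_realpow)
    finally show ?thesis .
  qed
  define Prs where "Prs = {ldist x y | x y. x \<in> P \<and> y \<in> P \<and> x \<noteq> y}"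
  have Prs_fin: "finite Prs"
  proof -
    have "Prs \<subseteq> (\<lambda>(x, y). ldist x y) ` (P \<times> P)" unfolding Prs_def by auto
    then show ?thesis using fin by (meson finite_SigmaI finite_imageI finite_subset)
  qed
  have "card P \<ge> 2" using k kP by linarith
  then obtain x0 y0 where xy0: "x0 \<in> P" "y0 \<in> P" "x0 \<noteq> y0"
    by (metis One_nat_def card.empty card_1_singletonE card_le_Suc0_iff_eq fin not_less_eq_eq numeral_2_eq_2 zero_less_Suc)
  have Prs_ne: "Prs \<noteq> {}" using xy0 unfolding Prs_def by auto
  define \<mu> where "\<mu> = Min Prs"
  have mu_pos: "\<mu> > 0"
  proof -
    have "\<mu> \<in> Prs" unfolding \<mu>_def using Prs_fin Prs_ne by (rule Min_in)
    then obtain x y where "x \<in> P" "y \<in> P" "x \<noteq> y" "\<mu> = ldist x y" unfolding Prs_def by auto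
    then show ?thesis using ldist_pos Pd by auto
  qed
  have mu_le: "\<mu> \<le> ldist x y" if "x \<in> P" "y \<in> P" "x \<noteq> y" for x y
    unfolding \<mu>_def using Prs_fin that by (intro Min_le) (auto simp: Prs_def)
  obtain Lv where Lv: "2 * r / \<mu> < 2 ^ Lv" using real_arch_pow[of 2 "2 * r / \<mu>"] by auto
  have Lv2: "2 * r / 2 ^ (j0 + Lv) < \<mu>"
  proof -
    have "(2::real) ^ Lv \<le> 2 ^ (j0 + Lv)" by (rule power_increasing) auto
    then have "2 * r / \<mu> < 2 ^ (j0 + Lv)" using Lv by linarith
    then show ?thesis using mu_pos by (simp add: divide_less_eq mult.commute)
  qed
  have top: "Nf (j0 + Lv) = P"
  proof
    show "Nf (j0 + Lv) \<subseteq> P" by (rule NfP)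
    show "P \<subseteq> Nf (j0 + Lv)"
    proof
      fix x assume x: "x \<in> P"
      then obtain y where y: "y \<in> Nf (j0 + Lv)" "ldist y x \<le> 2 * r / 2 ^ (j0 + Lv)" using Nfn by blast
      have "y = x"
      proof (rule ccontr)
        assume "y \<noteq> x"
        then have "\<mu> \<le> ldist y x" using mu_le[of y x] y(1) NfP x by blast
        then show False using y(2) Lv2 by linarith
      qed
      then show "x \<in> Nf (j0 + Lv)" using y by simp
    qed
  qed
  define N0 where "N0 = Nf j0"
  define Pd2 where "Pd2 = {(x, y). x \<in> P \<and> y \<in> P \<and> x \<noteq> y}"
  define Nd where "Nd = {(c, c'). c \<in> N0 \<and> c' \<in> N0 \<and> c \<noteq> c'}"
  define Ch where "Ch = {(i, y). i < Lv \<and> y \<in> Nf (j0 + i + 1) \<and> y \<noteq> par (j0 + i) y}"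
  define Binj where "Binj p = {G \<in> space (gauss_jl t d). gd G (fst p) (snd p) \<le> 0}" for p
  define Bup where "Bup p = {G \<in> space (gauss_jl t d). (1 + \<delta>) * ldist (fst p) (snd p) \<le> gd G (fst p) (snd p)}" for p
  define Blo where "Blo p = {G \<in> space (gauss_jl t d). gd G (fst p) (snd p) \<le> (1 - \<delta>) * ldist (fst p) (snd p)}" for p
  define Bch where "Bch q = {G \<in> space (gauss_jl t d). (2 + real (fst q)) * ldist (snd q) (par (j0 + fst q) (snd q))
                              \<le> gd G (snd q) (par (j0 + fst q) (snd q))}" for q
  define U1 where "U1 = (\<Union>p\<in>Pd2. Binj p)"
  define U2 where "U2 = (\<Union>p\<in>Nd. Bup p \<union> Blo p)"
  define U3 where "U3 = (\<Union>q\<in>Ch. Bch q)"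
  define A where "A = space (gauss_jl t d) - (U1 \<union> U2 \<union> U3)"
  have finPd2: "finite Pd2" unfolding Pd2_def by (rule finite_subset[of _ "P \<times> P"]) (use fin in auto)
  have finNd: "finite Nd" unfolding Nd_def by (rule finite_subset[of _ "N0 \<times> N0"]) (use Nffin in \<open>auto simp: N0_def\<close>)
  have ChS: "Ch \<subseteq> Sigma {..<Lv} (\<lambda>i. Nf (j0 + i + 1))" unfolding Ch_def by auto
  have finCh: "finite Ch" by (rule finite_subset[OF ChS]) (use Nffin in auto)
  have sB: "Binj p \<in> sets (gauss_jl t d)" "Bup p \<in> sets (gauss_jl t d)" "Blo p \<in> sets (gauss_jl t d)"
    "Bch q \<in> sets (gauss_jl t d)" for p q
    unfolding Binj_def Bup_def Blo_def Bch_def by (rule gd_meas')+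
  have sU: "U1 \<in> sets (gauss_jl t d)" "U2 \<in> sets (gauss_jl t d)" "U3 \<in> sets (gauss_jl t d)"
    unfolding U1_def U2_def U3_def using sB finPd2 finNd finCh by auto
  have sA: "A \<in> sets (gauss_jl t d)" unfolding A_def using sU by auto
  have lenP: "length x = d" if "x \<in> P" for x using that Pd by auto
  have m1: "measure (gauss_jl t d) U1 \<le> 0"
  proof -
    have "measure (gauss_jl t d) U1 \<le> (\<Sum>p\<in>Pd2. measure (gauss_jl t d) (Binj p))"
      unfolding U1_def by (rule finite_measure_subadditive_finite[OF finPd2]) (use sB in auto)
    also have "\<dots> = 0"
    proof (rule sum.neutral, rule ballI)
      fix p assume p: "p \<in> Pd2"
      then obtain x y where xy: "p = (x, y)" "x \<in> P" "y \<in> P" "x \<noteq> y" unfolding Pd2_def by auto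
      show "measure (gauss_jl t d) (Binj p) = 0"
        unfolding Binj_def gd_def xy(1) using prob_collapse[OF t0 lenP[OF xy(2)] lenP[OF xy(3)] xy(4)] by simp
    qed
    finally show ?thesis .
  qed
  define q where "q = exp (- (real t / 2) * \<delta>\<^sup>2)"
  have m2: "measure (gauss_jl t d) U2 \<le> 2 * (real k * 2 ^ (lam * j0)) ^ 2 * q"
  proof -
    have "measure (gauss_jl t d) U2 \<le> (\<Sum>p\<in>Nd. measure (gauss_jl t d) (Bup p \<union> Blo p))"
      unfolding U2_def by (rule finite_measure_subadditive_finite[OF finNd]) (use sB in auto)
    also have "\<dots> \<le> (\<Sum>p\<in>Nd. 2 * q)"
    proof (rule sum_mono)
      fix p assume p: "p \<in> Nd"
      then obtain x y where xy: "p = (x, y)" "x \<in> P" "y \<in> P" "x \<noteq> y" unfolding Nd_def N0_def using NfP by blast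
      have "measure (gauss_jl t d) (Bup p \<union> Blo p) \<le> measure (gauss_jl t d) (Bup p) + measure (gauss_jl t d) (Blo p)"
        using sB by (intro measure_Un_le) auto
      moreover have "measure (gauss_jl t d) (Bup p) \<le> q"
        unfolding Bup_def gd_def xy(1) q_def using prob_expand[OF t0 lenP[OF xy(2)] lenP[OF xy(3)] xy(4), of "1 + \<delta>"] d0 by simp
      moreover have "measure (gauss_jl t d) (Blo p) \<le> q"
        unfolding Blo_def gd_def xy(1) q_def using prob_contract'[OF t0 lenP[OF xy(2)] lenP[OF xy(3)] xy(4), of "1 - \<delta>"] d0 by simp
      ultimately show "measure (gauss_jl t d) (Bup p \<union> Blo p) \<le> 2 * q" by linarith
    qed
    also have "\<dots> = real (card Nd) * (2 * q)" by simp
    also have "\<dots> \<le> real (card N0 * card N0) * (2 * q)"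
    proof (rule mult_right_mono)
      have "card Nd \<le> card (N0 \<times> N0)" unfolding Nd_def by (rule card_mono) (use Nffin in \<open>auto simp: N0_def\<close>)
      then have "card Nd \<le> card N0 * card N0" by (simp add: card_cartesian_product)
      then show "real (card Nd) \<le> real (card N0 * card N0)" by (simp only: of_nat_le_iff)
    qed (simp add: q_def)
    also have "\<dots> \<le> (real k * 2 ^ (lam * j0)) * (real k * 2 ^ (lam * j0)) * (2 * q)"
    proof (rule mult_right_mono)
      have "real (card N0) * real (card N0) \<le> (real k * 2 ^ (lam * j0)) * (real k * 2 ^ (lam * j0))"
        by (rule mult_mono) (use Nfc'[of j0] in \<open>auto simp: N0_def\<close>)
      then show "real (card N0 * card N0) \<le> (real k * 2 ^ (lam * j0)) * (real k * 2 ^ (lam * j0))" by simp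
    qed (simp add: q_def)
    finally show ?thesis by (simp add: power2_eq_square algebra_simps)
  qed
  define ei where "ei i = exp (- (real t / 2) * (1 + real i)\<^sup>2)" for i :: nat
  have m3: "measure (gauss_jl t d) U3 \<le> (\<Sum>i<Lv. real k * 2 ^ (lam * (j0 + i + 1)) * ei i)"
  proof -
    have "measure (gauss_jl t d) U3 \<le> (\<Sum>q\<in>Ch. measure (gauss_jl t d) (Bch q))"
      unfolding U3_def by (rule finite_measure_subadditive_finite[OF finCh]) (use sB in auto)
    also have "\<dots> \<le> (\<Sum>q\<in>Ch. ei (fst q))"
    proof (rule sum_mono)
      fix qq assume qq: "qq \<in> Ch"
      then obtain i y where iy: "qq = (i, y)" "i < Lv" "y \<in> Nf (j0 + i + 1)" "y \<noteq> par (j0 + i) y" unfolding Ch_def by auto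
      have yP: "y \<in> P" using iy(3) NfP by blast
      have pP: "par (j0 + i) y \<in> P" using par[of y "j0 + i"] iy(3) NfP by auto
      show "measure (gauss_jl t d) (Bch qq) \<le> ei (fst qq)"
        unfolding Bch_def gd_def iy(1) ei_def
        using prob_expand[OF t0 lenP[OF yP] lenP[OF pP] iy(4), of "2 + real i"] by (simp add: add.commute)
    qed
    also have "\<dots> \<le> (\<Sum>qq\<in>Sigma {..<Lv} (\<lambda>i. Nf (j0 + i + 1)). ei (fst qq))"
      by (rule sum_mono2[OF _ ChS]) (use Nffin in \<open>auto simp: ei_def\<close>)
    also have "\<dots> = (\<Sum>i<Lv. \<Sum>y\<in>Nf (j0 + i + 1). ei i)"
      using sum.Sigma[of "{..<Lv}" "\<lambda>i. Nf (j0 + i + 1)" "\<lambda>i y. ei i"] Nffin by (simp add: case_prod_beta)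
    also have "\<dots> = (\<Sum>i<Lv. real (card (Nf (j0 + i + 1))) * ei i)" by simp
    also have "\<dots> \<le> (\<Sum>i<Lv. real k * 2 ^ (lam * (j0 + i + 1)) * ei i)"
      by (rule sum_mono, rule mult_right_mono[OF Nfc']) (simp add: ei_def)
    finally show ?thesis .
  qed
  have W: "12 * real k ^ 2 * 4 ^ (lam * (j0 + 1)) \<le> exp (real t * \<delta>\<^sup>2 / 2)"
    using numeric_W[OF e k tb j0b] unfolding \<delta>_def .
  have tot: "2 * (real k * 2 ^ (lam * j0)) ^ 2 * q + (\<Sum>i<Lv. real k * 2 ^ (lam * (j0 + i + 1)) * ei i) \<le> 1 / 3"
    unfolding q_def ei_def by (rule numeric_sum[OF _ W d0(1,2)]) (use k in auto)
  have "measure (gauss_jl t d) (U1 \<union> U2 \<union> U3) \<le> measure (gauss_jl t d) U1 + measure (gauss_jl t d) U2 + measure (gauss_jl t d) U3"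
    using measure_Un_le[of "U1 \<union> U2" "gauss_jl t d" U3] measure_Un_le[of U1 "gauss_jl t d" U2] sU by auto
  then have mbad: "measure (gauss_jl t d) (U1 \<union> U2 \<union> U3) \<le> 1 / 3" using m1 m2 m3 tot by linarith
  have mA: "measure (gauss_jl t d) A \<ge> 2 / 3"
  proof -
    have "measure (gauss_jl t d) A = 1 - measure (gauss_jl t d) (U1 \<union> U2 \<union> U3)"
      unfolding A_def by (rule prob_compl) (use sU in auto)
    then show ?thesis using mbad by linarith
  qed
  show ?thesis
  proof (intro bexI[of _ A] conjI ballI allI impI)
    show "A \<in> sets (gauss_jl t d)" by (rule sA)
    show "2 / 3 \<le> measure (gauss_jl t d) A" by (rule mA)
    fix G l F mx S
    assume G: "G \<in> A" and pP: "property_P k l F"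
      and SH: "S \<subseteq> P \<and> card S = k \<and> div_opt k mx F (jl_apply t d G ` P) / (1 + \<epsilon>) \<le> div_val mx F (jl_apply t d G ` S)"
    define g where "g = jl_apply t d G"
    have GS: "G \<in> space (gauss_jl t d)" "G \<notin> U1" "G \<notin> U2" "G \<notin> U3" using G unfolding A_def by auto
    have gl: "\<And>x. length (g x) = t" by (simp add: g_def)
    have inj: "inj_on g P"
    proof (rule inj_onI)
      fix x y assume xy: "x \<in> P" "y \<in> P" "g x = g y"
      show "x = y"
      proof (rule ccontr)
        assume "x \<noteq> y"
        then have "(x, y) \<in> Pd2" using xy unfolding Pd2_def by auto
        then have "G \<notin> Binj (x, y)" using GS(2) unfolding U1_def by blast
        then have "gd G x y > 0" using GS(1) unfolding Binj_def by auto
        then show False using xy(3) unfolding gd_def g_def by simp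
      qed
    qed
    have topN: "ldist (g c) (g c') \<le> (1 + \<delta>) * ldist c c' \<and> (1 - \<delta>) * ldist c c' \<le> ldist (g c) (g c')"
      if "c \<in> Nf j0" "c' \<in> Nf j0" "c \<noteq> c'" for c c'
    proof -
      have "(c, c') \<in> Nd" using that unfolding Nd_def N0_def by auto
      then have "G \<notin> Bup (c, c')" "G \<notin> Blo (c, c')" using GS(3) unfolding U2_def by blast+
      then show ?thesis using GS(1) unfolding Bup_def Blo_def gd_def g_def by auto
    qed
    have ev: "ldist (g y) (g (par (j0 + i) y)) \<le> (2 + real i) * ldist y (par (j0 + i) y)"
      if "i < Lv" "y \<in> Nf (j0 + i + 1)" for i y
    proof (cases "y = par (j0 + i) y")
      case True
      then show ?thesis by (metis ldist_self mult_zero_right order_refl)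
    next
      case False
      then have "(i, y) \<in> Ch" using that unfolding Ch_def by auto
      then have "G \<notin> Bch (i, y)" using GS(4) unfolding U3_def by blast
      then show ?thesis using GS(1) unfolding Bch_def gd_def g_def by auto
    qed
    have r0: "r \<ge> 0" using r by simp
    have near: "\<forall>x\<in>P. \<exists>c\<in>Nf j0. ldist c x \<le> 12 * r / 2 ^ j0 \<and> ldist (g c) (g x) \<le> 12 * r / 2 ^ j0"
      by (rule chain[OF Pd gl NfP par top ev r0])
    define B where "B = 12 * r / 2 ^ j0"
    have B0: "B \<ge> 0" using r by (simp add: B_def)
    have B6: "6 * B \<le> \<delta> * r"
    proof -
      have "72 / 2 ^ j0 \<le> \<delta>"
      proof -
        have "72 \<le> \<delta> * 2 ^ j0" using j0a e by (simp add: \<delta>_def divide_le_eq field_simps)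
        then show ?thesis by (simp add: divide_le_eq)
      qed
      then have "72 / 2 ^ j0 * r \<le> \<delta> * r" using r by (intro mult_right_mono) auto
      then show ?thesis by (simp add: B_def)
    qed
    have dist: "ldist (g x) (g y) \<le> (1 + \<delta>) * ldist x y + 6 * B"
               "(1 - \<delta>) * ldist x y - 6 * B \<le> ldist (g x) (g y)" if "x \<in> P" "y \<in> P" for x y
      using distortion[OF NfP Pd gl B0 _ _ near[folded B_def] topN that] d0 by auto
    have up: "ldist (g x) (g y) \<le> (1 + \<delta>) * ldist x y + \<delta> * r" if "x \<in> P" "y \<in> P" "x \<noteq> y" for x y
      using dist(1)[OF that(1,2)] B6 by linarith
    have lo: "(1 - \<delta>) * ldist x y - \<delta> * r \<le> ldist (g x) (g y)" if "x \<in> P" "y \<in> P" "x \<noteq> y" for x y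
      using dist(2)[OF that(1,2)] B6 by linarith
    have sep: "r \<le> ldist x y" if "x \<in> Ss" "y \<in> Ss" "x \<noteq> y" for x y using Ss(3) that by blast
    show "div_opt k mx F P / (1 + 2 * \<epsilon>) \<le> div_val mx F S"
      by (rule final_det[OF pP fin kP inj up lo Ss(1,2) sep r \<delta>_def e]) (use SH in \<open>auto simp: g_def\<close>)
  qed
qed

theorem mainTheorem8:
  shows "\<exists>C C' :: real. C > 0 \<and> C' > 0 \<and>
    (\<forall>(\<epsilon>::real) (d::nat) (lam::nat) (k::nat). 0 < \<epsilon> \<and> \<epsilon> < 1 \<and> k \<ge> 2 \<longrightarrow>
      (let t = nat \<lceil>C * \<epsilon> powr (-2) * (real lam * ln (2 / \<epsilon>) + ln (real k))\<rceil> in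
       \<forall>P. finite P \<and> P \<subseteq> {x. length x = d} \<and> card P \<ge> k \<and> ddim d P = lam \<longrightarrow>
         (\<exists>A \<in> sets (gauss_jl t d). measure (gauss_jl t d) A \<ge> 2 / 3 \<and>
            (\<forall>G\<in>A. \<forall>l F mx. property_P k l F \<longrightarrow>
               (\<forall>S. S \<subseteq> P \<and> card S = k \<and>
                    div_val mx F (jl_apply t d G ` S) \<ge> div_opt k mx F (jl_apply t d G ` P) / (1 + \<epsilon>)
                    \<longrightarrow> div_val mx F S \<ge> div_opt k mx F P / (1 + C' * \<epsilon>))))))"
proof (rule exI[of _ "2 ^ 20 :: real"], rule exI[of _ "2 :: real"], intro conjI allI impI)
  show "(0::real) < 2 ^ 20" by simp
  show "(0::real) < 2" by simp
  fix \<epsilon> :: real and d lam k :: nat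
  assume H: "0 < \<epsilon> \<and> \<epsilon> < 1 \<and> 2 \<le> k"
  have e: "0 < \<epsilon>" "\<epsilon> < 1" and k: "2 \<le> k" using H by auto
  define X where "X = (2::real) ^ 20 * \<epsilon> powr (-2) * (real lam * ln (2 / \<epsilon>) + ln (real k))"
  define t where "t = nat \<lceil>X\<rceil>"
  have pw: "\<epsilon> powr (-2) = 1 / \<epsilon>\<^sup>2"
    using e by (simp add: powr_minus_divide powr_numeral)
  have X2: "X = 2 ^ 20 / \<epsilon>\<^sup>2 * (real lam * ln (2 / \<epsilon>) + ln (real k))"
    unfolding X_def pw by simp
  have lnk: "ln (real k) > 0" using k by simp
  have ln2e: "ln (2 / \<epsilon>) \<ge> 0" using e by (simp add: le_divide_eq)
  have Xpos: "X > 0" unfolding X2 using lnk ln2e e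
    by (intro mult_pos_pos) (auto intro: add_nonneg_pos)
  have tb: "real t \<ge> 2 ^ 20 / \<epsilon>\<^sup>2 * (real lam * ln (2 / \<epsilon>) + ln (real k))"
  proof -
    have "X \<le> real_of_int \<lceil>X\<rceil>" by (rule le_of_int_ceiling)
    also have "\<dots> = real t" unfolding t_def using Xpos by simp
    finally show ?thesis unfolding X2 .
  qed
  have t0: "t > 0" using tb Xpos unfolding X2 by linarith
  show "let t = nat \<lceil>2 ^ 20 * \<epsilon> powr (-2) * (real lam * ln (2 / \<epsilon>) + ln (real k))\<rceil> in
       \<forall>P. finite P \<and> P \<subseteq> {x. length x = d} \<and> card P \<ge> k \<and> ddim d P = lam \<longrightarrow>
         (\<exists>A \<in> sets (gauss_jl t d). measure (gauss_jl t d) A \<ge> 2 / 3 \<and>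
            (\<forall>G\<in>A. \<forall>l F mx. property_P k l F \<longrightarrow>
               (\<forall>S. S \<subseteq> P \<and> card S = k \<and>
                    div_val mx F (jl_apply t d G ` S) \<ge> div_opt k mx F (jl_apply t d G ` P) / (1 + \<epsilon>)
                    \<longrightarrow> div_val mx F S \<ge> div_opt k mx F P / (1 + 2 * \<epsilon>))))"
    unfolding Let_def X_def[symmetric] t_def[symmetric]
  proof (intro allI impI)
    fix P :: "real list set"
    assume P: "finite P \<and> P \<subseteq> {x. length x = d} \<and> card P \<ge> k \<and> ddim d P = lam"
    show "\<exists>A \<in> sets (gauss_jl t d). measure (gauss_jl t d) A \<ge> 2 / 3 \<and>
            (\<forall>G\<in>A. \<forall>l F mx. property_P k l F \<longrightarrow>
               (\<forall>S. S \<subseteq> P \<and> card S = k \<and>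
                    div_val mx F (jl_apply t d G ` S) \<ge> div_opt k mx F (jl_apply t d G ` P) / (1 + \<epsilon>)
                    \<longrightarrow> div_val mx F S \<ge> div_opt k mx F P / (1 + 2 * \<epsilon>)))"
      by (rule main_prob[OF e k t0 tb]) (use P in auto)
  qed
qed


end
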